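(* Let $\mathcal{Z}=\mathcal{Z}_G^{\mathcal{C}}\subset\mathrm{Sym}(p)$ be a cBC-space with respect to an ordered partition $(n_1,\dots,n_r)$ of $p$, let $i\in[r]$, $\alpha\in[d_i]$, and let $A\in\mathrm{Sym}^+(p)$. Let $\{B^{(i)}_1,\dots,B^{(i)}_{q_i}\}$ be a basis of $L_i(\mathcal{Z})$, set $U_t=B^{(i)}_tc^{(i)}_\alpha$ for $t\in[q_i]$, and let $G_{i,\alpha}\in\mathbb{R}^{q_i\times q_i}$ be the Gram matrix $(G_{i,\alpha})_{ts}=\operatorname{tr}(U_tU_s^\top)$. Then $m_{i,\alpha}=\operatorname{rank}G_{i,\alpha}$. Moreover, let $m=m_{i,\alpha}$, and if $m>0$ let $t_1,\dots,t_m\in[q_i]$ be indices such that the principal submatrix $\widetilde G_{i,\alpha}=((G_{i,\alpha})_{t_kt_l})_{k,l\in[m]}$ is nonsingular (e.g. the pivots of a Cholesky decomposition with complete pivoting). Put $U'_k=U_{t_k}$, $\Psi_{i,\alpha}(A)\in\mathbb{R}^{m\times m}$ with $(\Psi_{i,\alpha}(A))_{kl}=\operatorname{tr}(AU'_k(U'_l)^\top)$, $V_{i,\alpha}(A)\in\mathbb{R}^{1\times m}$ with $(V_{i,\alpha}(A))_{1k}=\mu_{i,\alpha}^{-1/2}\operatorname{tr}(Ac^{(i)}_\alpha(U'_k)^\top)$, and $\lambda_{i,\alpha}(A)=\mu_{i,\alpha}^{-1}\operatorname{tr}(Ac^{(i)}_\alpha)$. Then $\{U'_1,\dots,U'_m\}$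 is a basis of $\mathfrak{h}_{i,\alpha}$, $\Psi_{i,\alpha}(A)$ is positive definite, and $$\det\psi_{i,\alpha}(A)=\frac{\det\Psi_{i,\alpha}(A)}{\det\widetilde G_{i,\alpha}},\qquad \frac{\det\phi_{i,\alpha}(A)}{\det\psi_{i,\alpha}(A)}=\lambda_{i,\alpha}(A)-V_{i,\alpha}(A)\Psi_{i,\alpha}(A)^{-1}V_{i,\alpha}(A)^\top.$$ If $m=0$, then (with the convention $\det\psi_{i,\alpha}(A)=1$) $\det\phi_{i,\alpha}(A)/\det\psi_{i,\alpha}(A)=\lambda_{i,\alpha}(A)$.
   Context: Colored graph: $G=(V,E)$ finite simple undirected graph on $V=[p]$ with a coloring $\mathcal{C}$: vertex color classes $V_1,\dots,V_r$, edge color classes partitioning $E$; the extended edge set $\tilde E=E\cup\{\{v\}:v\in V\}$ is colored with loops $\{v\}$ colored by the color of $v$, and $c(v,w)$ denotes the color of $\{v,w\}\in\tilde E$. $\mathcal{Z}_G^{\mathcal{C}}$ is the space of $x\in\mathrm{Sym}(p)$ with $x_{ij}=0$ whenever $i\ne j$, $\{i,j\}\notin E$, and $x_{ij}=x_{kl}$ whenever $\{i,j\},\{k,l\}\in\tilde E$ have $c(i,j)=c(k,l)$. Block notation: for an ordered partition $(n_1,\dots,n_r)$ of $p$, $x\in\mathrm{Sym}(p)$ has blocks $X_{kh}\in\mathbb{R}^{n_k\times n_h}$; $\mathrm{BlockTri}(x)$ keeps blocks with $k\ge h$, $\mathrm{BlockDiag}(x)$ keeps only diagonal blocks. $M_i(\mathcal{Z})=\{x\in\mathcal{Z}: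 X_{kh}=0$ unless $(k,h)=(i,i)\}$, $L_i(\mathcal{Z})=\{x\in\mathcal{Z}: X_{kh}=0$ unless $k>h=i$ or $h>k=i\}$. $\mathcal{Z}$ is a cBC-space if (Z0) $I_p\in\mathcal{Z}$ and $\mathcal{Z}=(\bigoplus_{i\in[r]}M_i(\mathcal{Z}))\oplus(\bigoplus_{i\in[r-1]}L_i(\mathcal{Z}))$; (Z1) $\mathrm{BlockTri}(x)\mathrm{BlockTri}(x)^\top\in\mathcal{Z}$ for all $x\in\mathcal{Z}$; (Z2) $\mathrm{BlockDiag}(x)\mathrm{BlockDiag}(y)\in\mathcal{Z}$ for all $x,y\in\mathcal{Z}$. Structure data: $e^{(i)}$ is the $p\times p$ matrix with $(i,i)$ block $I_{n_i}$ and others $0$; $\{c^{(i)}_\alpha\}_{\alpha\in[d_i]}$ is a Jordan frame of $M_i(\mathcal{Z})$ (a maximal family of nonzero mutually orthogonal idempotents $c^{(i)}_\alpha c^{(i)}_\beta=\delta_{\alpha\beta}c^{(i)}_\alpha$ in $M_i(\mathcal{Z})$ summing to $e^{(i)}$). $\mu_{i,\alpha}=\operatorname{rank}c^{(i)}_\alpha$, $\tilde e^{(i)}_\alpha=c^{(i)}_\alpha/\sqrt{\mu_{i,\alpha}}$, $c^{(i)}_{>\alpha}=\sum_{\beta>\alpha}c^{(i)}_\beta$, $\mathfrak{h}_{i,\alpha}=c^{(i)}_{>\alpha}M_i(\mathcal{Z})c^{(i)}_\alpha\oplus L_i(\mathcal{Z})c^{(i)}_\alpha$, with an orthonormal basis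 $\{\tilde f^{(i)}_\gamma\}_{\gamma\in J_{i,\alpha}}$ for $\langle X,Y\rangle=\operatorname{tr}(XY^\top)$, and $m_{i,\alpha}=\dim\mathfrak{h}_{i,\alpha}$. For $A\in\mathrm{Sym}(p)$ with $m_{i,\alpha}>0$: $\psi_{i,\alpha}(A)$ is the $m_{i,\alpha}\times m_{i,\alpha}$ matrix with entries $\operatorname{tr}(A\tilde f^{(i)}_\gamma(\tilde f^{(i)}_{\gamma'})^\top)$, $v_{i,\alpha}(A)$ the row vector with entries $\operatorname{tr}(A\tilde e^{(i)}_\alpha(\tilde f^{(i)}_\gamma)^\top)$, and $\phi_{i,\alpha}(A)=\begin{bmatrix}\operatorname{tr}(A\tilde e^{(i)}_\alpha\tilde e^{(i)}_\alpha)&v_{i,\alpha}(A)\\ v_{i,\alpha}(A)^\top&\psi_{i,\alpha}(A)\end{bmatrix}$; if $m_{i,\alpha}=0$, $\phi_{i,\alpha}(A)=\operatorname{tr}(A\tilde e^{(i)}_\alpha\tilde e^{(i)}_\alpha)$. *)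

theory Defs
  imports "Jordan_Normal_Form.Determinant" "Jordan_Normal_Form.DL_Rank"
          "Jordan_Normal_Form.Gauss_Jordan_Elimination"
begin

(* All indices are 0-based: vertices/coordinates a < p, blocks k < r = length ns,
   Jordan-frame indices alpha < d. *)

definition mtrace :: "real mat \<Rightarrow> real" where
  "mtrace A = (\<Sum>a<dim_row A. A $$ (a,a))"

definition sym_mat :: "nat \<Rightarrow> real mat \<Rightarrow> bool" where
  "sym_mat p x \<longleftrightarrow> x \<in> carrier_mat p p \<and> transpose_mat x = x"

definition posdef_mat :: "nat \<Rightarrow> real mat \<Rightarrow> bool" where
  "posdef_mat p A \<longleftrightarrow> sym_mat p A \<and>
     (\<forall>v \<in> carrier_vec p. v \<noteq> 0\<^sub>v p \<longrightarrow> 0 < v \<bullet> (A *\<^sub>v v))"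

definition simple_graph_on :: "nat \<Rightarrow> nat set set \<Rightarrow> bool" where
  "simple_graph_on p E \<longleftrightarrow> (\<forall>e\<in>E. \<exists>a b. a < p \<and> b < p \<and> a \<noteq> b \<and> e = {a,b})"

definition ext_edges :: "nat \<Rightarrow> nat set set \<Rightarrow> nat set set" where
  "ext_edges p E = E \<union> {{v} | v. v < p}"

(* Z_G^C ; colr gives the colour of each extended edge (loops {v} carry vertex colours) *)
definition ZGC :: "nat \<Rightarrow> nat set set \<Rightarrow> (nat set \<Rightarrow> 'c) \<Rightarrow> real mat set" where
  "ZGC p E colr = {x. sym_mat p x \<and>
     (\<forall>a<p. \<forall>b<p. a \<noteq> b \<and> {a,b} \<notin> E \<longrightarrow> x $$ (a,b) = 0) \<and>
     (\<forall>a<p. \<forall>b<p. \<forall>c<p. \<forall>e<p. {a,b} \<in> ext_edges p E \<and> {c,e} \<in> ext_edges p E \<and>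
         colr {a,b} = colr {c,e} \<longrightarrow> x $$ (a,b) = x $$ (c,e))}"

definition ordered_partition :: "nat \<Rightarrow> nat list \<Rightarrow> bool" where
  "ordered_partition p ns \<longleftrightarrow> (\<forall>k\<in>set ns. 0 < k) \<and> sum_list ns = p"

definition blk :: "nat list \<Rightarrow> nat \<Rightarrow> nat" where
  "blk ns a = (LEAST k. a < sum_list (take (Suc k) ns))"

definition block_tri :: "nat list \<Rightarrow> real mat \<Rightarrow> real mat" where
  "block_tri ns x = mat (sum_list ns) (sum_list ns)
     (\<lambda>(a,b). if blk ns b \<le> blk ns a then x $$ (a,b) else 0)"

definition block_diag :: "nat list \<Rightarrow> real mat \<Rightarrow> real mat" where
  "block_diag ns x = mat (sum_list ns) (sum_list ns)
     (\<lambda>(a,b). if blk ns b = blk ns a then x $$ (a,b) else 0)"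

definition Mspace :: "nat list \<Rightarrow> nat \<Rightarrow> real mat set \<Rightarrow> real mat set" where
  "Mspace ns i Z = {x \<in> Z. \<forall>a<sum_list ns. \<forall>b<sum_list ns.
      \<not> (blk ns a = i \<and> blk ns b = i) \<longrightarrow> x $$ (a,b) = 0}"

definition Lspace :: "nat list \<Rightarrow> nat \<Rightarrow> real mat set \<Rightarrow> real mat set" where
  "Lspace ns i Z = {x \<in> Z. \<forall>a<sum_list ns. \<forall>b<sum_list ns.
      \<not> ((blk ns b < blk ns a \<and> blk ns b = i) \<or> (blk ns a < blk ns b \<and> blk ns a = i))
      \<longrightarrow> x $$ (a,b) = 0}"

definition msum :: "nat \<Rightarrow> (nat \<Rightarrow> real mat) \<Rightarrow> nat set \<Rightarrow> real mat" where
  "msum p F S = mat p p (\<lambda>(a,b). \<Sum>k\<in>S. F k $$ (a,b))"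

definition cBC_space :: "nat list \<Rightarrow> real mat set \<Rightarrow> bool" where
  "cBC_space ns Z \<longleftrightarrow>
    (let p = sum_list ns; r = length ns in
      \<comment> \<open>(Z0)\<close>
      1\<^sub>m p \<in> Z \<and>
      Z = {x. \<exists>mf lf. (\<forall>k<r. mf k \<in> Mspace ns k Z) \<and> (\<forall>k<r - 1. lf k \<in> Lspace ns k Z) \<and>
                x = mat p p (\<lambda>(a,b). (\<Sum>k<r. mf k $$ (a,b)) + (\<Sum>k<r - 1. lf k $$ (a,b)))} \<and>
      (\<forall>mf lf mf' lf'. (\<forall>k<r. mf k \<in> Mspace ns k Z \<and> mf' k \<in> Mspace ns k Z) \<and>
          (\<forall>k<r - 1. lf k \<in> Lspace ns k Z \<and> lf' k \<in> Lspace ns k Z) \<and>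
          mat p p (\<lambda>(a,b). (\<Sum>k<r. mf k $$ (a,b)) + (\<Sum>k<r - 1. lf k $$ (a,b))) =
          mat p p (\<lambda>(a,b). (\<Sum>k<r. mf' k $$ (a,b)) + (\<Sum>k<r - 1. lf' k $$ (a,b)))
          \<longrightarrow> (\<forall>k<r. mf k = mf' k) \<and> (\<forall>k<r - 1. lf k = lf' k)) \<and>
      \<comment> \<open>(Z1)\<close>
      (\<forall>x\<in>Z. block_tri ns x * transpose_mat (block_tri ns x) \<in> Z) \<and>
      \<comment> \<open>(Z2)\<close>
      (\<forall>x\<in>Z. \<forall>y\<in>Z. block_diag ns x * block_diag ns y \<in> Z))"

definition e_blk :: "nat list \<Rightarrow> nat \<Rightarrow> real mat" where
  "e_blk ns i = mat (sum_list ns) (sum_list ns) (\<lambda>(a,b). if a = b \<and> blk ns a = i then 1 else 0)"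

definition orth_idem_family :: "nat \<Rightarrow> real mat set \<Rightarrow> (nat \<Rightarrow> real mat) \<Rightarrow> nat \<Rightarrow> bool" where
  "orth_idem_family p Mi cs d \<longleftrightarrow>
     (\<forall>\<alpha><d. cs \<alpha> \<in> Mi \<and> cs \<alpha> \<noteq> 0\<^sub>m p p) \<and>
     (\<forall>\<alpha><d. \<forall>\<beta><d. cs \<alpha> * cs \<beta> = (if \<alpha> = \<beta> then cs \<alpha> else 0\<^sub>m p p))"

definition jordan_frame :: "nat list \<Rightarrow> nat \<Rightarrow> real mat set \<Rightarrow> (nat \<Rightarrow> real mat) \<Rightarrow> nat \<Rightarrow> bool" where
  "jordan_frame ns i Z cs d \<longleftrightarrow>
     orth_idem_family (sum_list ns) (Mspace ns i Z) cs d \<and>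
     msum (sum_list ns) cs {..<d} = e_blk ns i \<and>
     (\<forall>cs' d'. orth_idem_family (sum_list ns) (Mspace ns i Z) cs' d' \<longrightarrow> d' \<le> d)"

definition mat_rank :: "nat \<Rightarrow> real mat \<Rightarrow> nat" where
  "mat_rank n A = vec_space.rank n A"

definition hspace :: "nat list \<Rightarrow> nat \<Rightarrow> real mat set \<Rightarrow> (nat \<Rightarrow> real mat) \<Rightarrow> nat \<Rightarrow> nat \<Rightarrow> real mat set" where
  "hspace ns i Z cs d \<alpha> = {msum (sum_list ns) cs {\<alpha><..<d} * x * cs \<alpha> + y * cs \<alpha> | x y.
      x \<in> Mspace ns i Z \<and> y \<in> Lspace ns i Z}"

definition mat_lincomb :: "nat \<Rightarrow> (nat \<Rightarrow> real) \<Rightarrow> real mat list \<Rightarrow> real mat" where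
  "mat_lincomb p c Us = mat p p (\<lambda>(a,b). \<Sum>k<length Us. c k * Us ! k $$ (a,b))"

definition mats_lin_indep :: "nat \<Rightarrow> real mat list \<Rightarrow> bool" where
  "mats_lin_indep p Us \<longleftrightarrow> (\<forall>c. mat_lincomb p c Us = 0\<^sub>m p p \<longrightarrow> (\<forall>k<length Us. c k = 0))"

definition mats_span :: "nat \<Rightarrow> real mat list \<Rightarrow> real mat set" where
  "mats_span p Us = {mat_lincomb p c Us | c. True}"

definition is_mat_basis :: "nat \<Rightarrow> real mat set \<Rightarrow> real mat list \<Rightarrow> bool" where
  "is_mat_basis p S Us \<longleftrightarrow> set Us \<subseteq> carrier_mat p p \<and> mats_lin_indep p Us \<and> mats_span p Us = S"

definition mat_dim :: "nat \<Rightarrow> real mat set \<Rightarrow> nat" where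
  "mat_dim p S = (THE n. \<exists>Us. is_mat_basis p S Us \<and> length Us = n)"

definition orthonormal_mats :: "real mat list \<Rightarrow> bool" where
  "orthonormal_mats fs \<longleftrightarrow> (\<forall>g<length fs. \<forall>g'<length fs.
      mtrace (fs ! g * transpose_mat (fs ! g')) = (if g = g' then 1 else 0))"

definition gram_mat :: "real mat list \<Rightarrow> real mat" where
  "gram_mat Us = mat (length Us) (length Us) (\<lambda>(t,s). mtrace (Us ! t * transpose_mat (Us ! s)))"

(* (tr(A F_k F_l^T))_{k,l}; gives psi_{i,alpha}(A) for the orthonormal basis and Psi_{i,alpha}(A) for U' *)
definition psi_mat :: "real mat \<Rightarrow> real mat list \<Rightarrow> real mat" where
  "psi_mat A Fs = mat (length Fs) (length Fs) (\<lambda>(k,l). mtrace (A * Fs ! k * transpose_mat (Fs ! l)))"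

(* phi_{i,alpha}(A) with et = tilde e^{(i)}_alpha and fs the orthonormal basis of h_{i,alpha};
   for fs = [] it is the 1x1 matrix tr(A et et) *)
definition phi_mat :: "real mat \<Rightarrow> real mat \<Rightarrow> real mat list \<Rightarrow> real mat" where
  "phi_mat A et fs = mat (Suc (length fs)) (Suc (length fs)) (\<lambda>(a,b).
      if a = 0 \<and> b = 0 then mtrace (A * et * et)
      else if a = 0 then mtrace (A * et * transpose_mat (fs ! (b - 1)))
      else if b = 0 then mtrace (A * et * transpose_mat (fs ! (a - 1)))
      else mtrace (A * fs ! (a - 1) * transpose_mat (fs ! (b - 1))))"

end

theory Submission
  imports Defs "Jordan_Normal_Form.DL_Rank_Submatrix"
begin

definition aip :: "real mat \<Rightarrow> real mat \<Rightarrow> real mat \<Rightarrow> real" where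
  "aip A X Y = mtrace (A * X * transpose_mat Y)"

lemma aip_sum:
  assumes "A \<in> carrier_mat p p" "X \<in> carrier_mat p p" "Y \<in> carrier_mat p p"
  shows "aip A X Y = (\<Sum>a<p. \<Sum>e<p. \<Sum>b<p. A$$(a,e) * X$$(e,b) * Y$$(a,b))"
proof -
  have "(A * X * transpose_mat Y) $$ (a,a) = (\<Sum>e<p. \<Sum>b<p. A$$(a,e) * X$$(e,b) * Y$$(a,b))"
    if "a < p" for a
    using assms that by (simp add: scalar_prod_def sum_distrib_left atLeast0LessThan mult.assoc)
  then show ?thesis using assms unfolding aip_def mtrace_def by simp
qed

lemma aip_sym:
  assumes "A \<in> carrier_mat p p" "X \<in> carrier_mat p p" "Y \<in> carrier_mat p p"
    and "transpose_mat A = A"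
  shows "aip A X Y = aip A Y X"
proof -
  have As: "A$$(a,e) = A$$(e,a)" if "a<p" "e<p" for a e
    using assms(1,4) that by (metis carrier_matD index_transpose_mat(1))
  have "aip A X Y = (\<Sum>a<p. \<Sum>e<p. \<Sum>b<p. A$$(a,e) * X$$(e,b) * Y$$(a,b))"
    using aip_sum assms by blast
  also have "\<dots> = (\<Sum>e<p. \<Sum>a<p. \<Sum>b<p. A$$(a,e) * X$$(e,b) * Y$$(a,b))"
    by (rule sum.swap)
  also have "\<dots> = (\<Sum>e<p. \<Sum>a<p. \<Sum>b<p. A$$(e,a) * Y$$(a,b) * X$$(e,b))"
    by (intro sum.cong refl) (simp add: As)
  also have "\<dots> = aip A Y X"
    using aip_sum assms by simp
  finally show ?thesis .
qed

lemma lincomb_index: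
  "i < p \<Longrightarrow> j < p \<Longrightarrow> mat_lincomb p w Us $$ (i,j) = (\<Sum>k<length Us. w k * Us ! k $$ (i,j))"
  unfolding mat_lincomb_def by simp

lemma lincomb_carrier[simp]: "mat_lincomb p w Us \<in> carrier_mat p p"
  unfolding mat_lincomb_def by simp

lemma aip_lincomb_left:
  assumes "A \<in> carrier_mat p p" "set Fs \<subseteq> carrier_mat p p" "Y \<in> carrier_mat p p"
  shows "aip A (mat_lincomb p w Fs) Y = (\<Sum>k<length Fs. w k * aip A (Fs!k) Y)"
proof -
  have F: "Fs ! k \<in> carrier_mat p p" if "k < length Fs" for k using assms(2) that by auto
  have "aip A (mat_lincomb p w Fs) Y =
      (\<Sum>a<p. \<Sum>e<p. \<Sum>b<p. A$$(a,e) * (\<Sum>k<length Fs. w k * Fs ! k $$ (e,b)) * Y$$(a,b))"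
    using assms by (simp add: aip_sum lincomb_index)
  also have "\<dots> = (\<Sum>a<p. \<Sum>e<p. \<Sum>b<p. \<Sum>k<length Fs. w k * (A$$(a,e) * Fs ! k $$ (e,b) * Y$$(a,b)))"
    by (simp add: sum_distrib_left sum_distrib_right mult_ac)
  also have "\<dots> = (\<Sum>k<length Fs. w k * (\<Sum>a<p. \<Sum>e<p. \<Sum>b<p. A$$(a,e) * Fs ! k $$ (e,b) * Y$$(a,b)))"
    by (simp add: sum_distrib_left sum.swap[where A="{..<length Fs}"])
  also have "\<dots> = (\<Sum>k<length Fs. w k * aip A (Fs!k) Y)"
    using assms F by (simp add: aip_sum)
  finally show ?thesis .
qed

lemma aip_lincomb_right:
  assumes "A \<in> carrier_mat p p" "set Fs \<subseteq> carrier_mat p p" "Y \<in> carrier_mat p p"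
  shows "aip A Y (mat_lincomb p w Fs) = (\<Sum>k<length Fs. w k * aip A Y (Fs!k))"
proof -
  have F: "Fs ! k \<in> carrier_mat p p" if "k < length Fs" for k using assms(2) that by auto
  have "aip A Y (mat_lincomb p w Fs) =
      (\<Sum>a<p. \<Sum>e<p. \<Sum>b<p. A$$(a,e) * Y$$(e,b) * (\<Sum>k<length Fs. w k * Fs ! k $$ (a,b)))"
    using assms by (simp add: aip_sum lincomb_index)
  also have "\<dots> = (\<Sum>a<p. \<Sum>e<p. \<Sum>b<p. \<Sum>k<length Fs. w k * (A$$(a,e) * Y $$ (e,b) * Fs ! k $$(a,b)))"
    by (simp add: sum_distrib_left sum_distrib_right mult_ac)
  also have "\<dots> = (\<Sum>k<length Fs. w k * (\<Sum>a<p. \<Sum>e<p. \<Sum>b<p. A$$(a,e) * Y $$ (e,b) * Fs ! k $$(a,b)))"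
    by (simp add: sum_distrib_left sum.swap[where A="{..<length Fs}"])
  also have "\<dots> = (\<Sum>k<length Fs. w k * aip A Y (Fs!k))"
    using assms F by (simp add: aip_sum)
  finally show ?thesis .
qed


lemma aip_self_cols:
  assumes "A \<in> carrier_mat p p" "X \<in> carrier_mat p p"
  shows "aip A X X = (\<Sum>b<p. col X b \<bullet> (A *\<^sub>v col X b))"
proof -
  have "aip A X X = (\<Sum>a<p. \<Sum>e<p. \<Sum>b<p. A$$(a,e) * X$$(e,b) * X$$(a,b))"
    using aip_sum assms by blast
  also have "\<dots> = (\<Sum>a<p. \<Sum>b<p. \<Sum>e<p. A$$(a,e) * X$$(e,b) * X$$(a,b))"
    by (rule sum.cong[OF refl], rule sum.swap)
  also have "\<dots> = (\<Sum>b<p. \<Sum>a<p. \<Sum>e<p. A$$(a,e) * X$$(e,b) * X$$(a,b))"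
    by (rule sum.swap)
  also have "\<dots> = (\<Sum>b<p. col X b \<bullet> (A *\<^sub>v col X b))"
  proof (rule sum.cong[OF refl])
    fix b assume "b \<in> {..<p}"
    then show "(\<Sum>a<p. \<Sum>e<p. A$$(a,e) * X$$(e,b) * X$$(a,b)) = col X b \<bullet> (A *\<^sub>v col X b)"
      using assms by (simp add: scalar_prod_def atLeast0LessThan sum_distrib_left sum_distrib_right mult.commute mult.left_commute)
  qed
  finally show ?thesis .
qed

lemma posdef_D:
  assumes "posdef_mat p A"
  shows "A \<in> carrier_mat p p" "transpose_mat A = A"
    "\<And>v. v \<in> carrier_vec p \<Longrightarrow> v \<noteq> 0\<^sub>v p \<Longrightarrow> 0 < v \<bullet> (A *\<^sub>v v)"
  using assms unfolding posdef_mat_def sym_mat_def by auto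

lemma posdef_quad_nonneg:
  assumes "posdef_mat p A" "v \<in> carrier_vec p"
  shows "0 \<le> v \<bullet> (A *\<^sub>v v)"
proof (cases "v = 0\<^sub>v p")
  case True
  have "A \<in> carrier_mat p p" using posdef_D(1)[OF assms(1)] .
  then show ?thesis using True by simp
next
  case False
  show ?thesis using posdef_D(3)[OF assms(1) assms(2) False] by simp
qed

lemma nonzero_mat_entry:
  assumes "X \<in> carrier_mat p p" "X \<noteq> 0\<^sub>m p p"
  shows "\<exists>a b. a < p \<and> b < p \<and> X $$ (a,b) \<noteq> 0"
proof (rule ccontr)
  assume "\<not> ?thesis"
  then have "X = 0\<^sub>m p p" using assms(1) by (intro eq_matI) auto
  then show False using assms(2) by simp
qed

lemma nonzero_vec_entry:
  assumes "v \<in> carrier_vec p" "v \<noteq> 0\<^sub>v p"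
  shows "\<exists>i. i < p \<and> v $ i \<noteq> 0"
proof (rule ccontr)
  assume "\<not> ?thesis"
  then have "v = 0\<^sub>v p" using assms(1) by (intro eq_vecI) auto
  then show False using assms(2) by simp
qed

lemma aip_self_pos:
  assumes "posdef_mat p A" "X \<in> carrier_mat p p" "X \<noteq> 0\<^sub>m p p"
  shows "0 < aip A X X"
proof -
  have A: "A \<in> carrier_mat p p" using posdef_D(1)[OF assms(1)] .
  obtain a b where ab: "a < p" "b < p" "X $$ (a,b) \<noteq> 0"
    using nonzero_mat_entry[OF assms(2,3)] by blast
  have "col X b $ a = X $$ (a,b)" using assms(2) ab by simp
  then have cb: "col X b \<noteq> 0\<^sub>v p" using ab by auto
  have cbc: "col X b \<in> carrier_vec p" using assms(2) by (simp add: carrier_matD(1) carrier_vecI)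
  have pos: "0 < col X b \<bullet> (A *\<^sub>v col X b)" using posdef_D(3)[OF assms(1) cbc cb] .
  have nn: "\<And>b'. b' \<in> {..<p} \<Longrightarrow> 0 \<le> col X b' \<bullet> (A *\<^sub>v col X b')"
  proof -
    fix b' assume "b' \<in> {..<p}"
    have "col X b' \<in> carrier_vec p" using assms(2) by (simp add: carrier_matD(1) carrier_vecI)
    then show "0 \<le> col X b' \<bullet> (A *\<^sub>v col X b')" using posdef_quad_nonneg[OF assms(1)] by blast
  qed
  have "0 < (\<Sum>b<p. col X b \<bullet> (A *\<^sub>v col X b))"
    by (rule sum_pos2[of "{..<p}" b "\<lambda>b. col X b \<bullet> (A *\<^sub>v col X b)", OF _ _ pos nn]) (use ab in auto)
  then show ?thesis using aip_self_cols[OF A assms(2)] by simp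
qed

lemma one_posdef: "posdef_mat p (1\<^sub>m p)"
proof -
  have "0 < v \<bullet> v" if vv: "v \<in> carrier_vec p" "v \<noteq> 0\<^sub>v p" for v :: "real vec"
  proof -
    obtain i where i: "i < p" "v $ i \<noteq> 0" using nonzero_vec_entry[OF vv] by blast
    have sq: "0 < v $ i * v $ i" using i(2) by (auto simp: zero_less_mult_iff linorder_neq_iff)
    have "0 < (\<Sum>j\<in>{0..<p}. v $ j * v $ j)"
      by (rule sum_pos2[of "{0..<p}" i "\<lambda>j. v $ j * v $ j", OF _ _ sq]) (use i in auto)
    then show ?thesis using vv unfolding scalar_prod_def by simp
  qed
  then show ?thesis unfolding posdef_mat_def sym_mat_def by simp
qed

lemma psi_index: "k < length Fs \<Longrightarrow> l < length Fs \<Longrightarrow> psi_mat A Fs $$ (k,l) = aip A (Fs!k) (Fs!l)"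
  unfolding psi_mat_def aip_def by simp

lemma psi_carrier[simp]: "psi_mat A Fs \<in> carrier_mat (length Fs) (length Fs)"
  unfolding psi_mat_def by simp

lemma psi_dims[simp]: "dim_row (psi_mat A Fs) = length Fs" "dim_col (psi_mat A Fs) = length Fs"
  unfolding psi_mat_def by simp_all

lemma psi_quad:
  assumes A: "A \<in> carrier_mat p p" and F: "set Fs \<subseteq> carrier_mat p p" and v: "v \<in> carrier_vec (length Fs)"
  shows "v \<bullet> (psi_mat A Fs *\<^sub>v v) = aip A (mat_lincomb p (\<lambda>k. v $ k) Fs) (mat_lincomb p (\<lambda>k. v $ k) Fs)"
proof -
  let ?X = "mat_lincomb p (\<lambda>k. v $ k) Fs"
  have Fk: "Fs ! k \<in> carrier_mat p p" if "k < length Fs" for k using F that by auto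
  have "aip A ?X ?X = (\<Sum>k<length Fs. v $ k * aip A (Fs!k) ?X)"
    using aip_lincomb_left[OF A F] by simp
  also have "\<dots> = (\<Sum>k<length Fs. v $ k * (\<Sum>l<length Fs. v $ l * aip A (Fs!k) (Fs!l)))"
    using aip_lincomb_right[OF A F] Fk by simp
  also have "\<dots> = v \<bullet> (psi_mat A Fs *\<^sub>v v)"
    using v by (simp add: scalar_prod_def atLeast0LessThan psi_index sum_distrib_left mult_ac)
  finally show ?thesis by simp
qed

lemma psi_posdef:
  assumes A: "posdef_mat p A" and F: "set Fs \<subseteq> carrier_mat p p" and ind: "mats_lin_indep p Fs"
  shows "posdef_mat (length Fs) (psi_mat A Fs)"
proof -
  have Ac: "A \<in> carrier_mat p p" and At: "transpose_mat A = A"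
    using A unfolding posdef_mat_def sym_mat_def by auto
  have Fk: "Fs ! k \<in> carrier_mat p p" if "k < length Fs" for k using F that by auto
  have sym: "sym_mat (length Fs) (psi_mat A Fs)"
    unfolding sym_mat_def using aip_sym[OF Ac _ _ At] Fk
    by (auto intro!: eq_matI simp: psi_index)
  have "0 < v \<bullet> (psi_mat A Fs *\<^sub>v v)" if v: "v \<in> carrier_vec (length Fs)" "v \<noteq> 0\<^sub>v (length Fs)" for v
  proof -
    have "\<exists>k. k < length Fs \<and> v $ k \<noteq> 0"
    proof (rule ccontr)
      assume "\<not> ?thesis"
      then have "v = 0\<^sub>v (length Fs)" using v(1) by (intro eq_vecI) auto
      then show False using v(2) by simp
    qed
    then obtain k where k: "k < length Fs" "v $ k \<noteq> 0" by blast
    have "mat_lincomb p (\<lambda>k. v $ k) Fs \<noteq> 0\<^sub>m p p"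
      using ind k unfolding mats_lin_indep_def by blast
    then show ?thesis using psi_quad[OF Ac F v(1)] aip_self_pos[OF A] by simp
  qed
  then show ?thesis using sym unfolding posdef_mat_def by blast
qed

lemma posdef_det:
  assumes "posdef_mat n M" shows "det M \<noteq> 0"
proof
  assume "det M = 0"
  moreover have M: "M \<in> carrier_mat n n" using assms unfolding posdef_mat_def sym_mat_def by auto
  ultimately obtain v where v: "v \<in> carrier_vec n" "v \<noteq> 0\<^sub>v n" "M *\<^sub>v v = 0\<^sub>v n"
    using det_0_iff_vec_prod_zero_field by blast
  then have "0 < v \<bullet> (M *\<^sub>v v)" using assms unfolding posdef_mat_def by blast
  then show False using v by simp
qed

lemma lincomb_dims[simp]: "dim_row (mat_lincomb p w Us) = p" "dim_col (mat_lincomb p w Us) = p"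
  unfolding mat_lincomb_def by simp_all

lemma span_nth:
  assumes "k < length Xs" "Xs ! k \<in> carrier_mat p p"
  shows "Xs ! k \<in> mats_span p Xs"
proof -
  have "mat_lincomb p (\<lambda>j. if j = k then 1 else 0) Xs = Xs ! k"
  proof (rule eq_matI)
    fix a b assume "a < dim_row (Xs ! k)" "b < dim_col (Xs ! k)"
    then have ab: "a < p" "b < p" using assms(2) by auto
    have "(\<Sum>j<length Xs. (if j = k then 1 else 0) * Xs ! j $$ (a,b)) =
        (\<Sum>j<length Xs. if j = k then Xs ! j $$ (a,b) else 0)"
      by (rule sum.cong) auto
    also have "\<dots> = Xs ! k $$ (a,b)" using assms(1) by (simp add: sum.delta)
    finally have "(\<Sum>j<length Xs. (if j = k then 1 else 0) * Xs ! j $$ (a,b)) = Xs ! k $$ (a,b)" .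
    then show "mat_lincomb p (\<lambda>j. if j = k then 1 else 0) Xs $$ (a,b) = Xs ! k $$ (a,b)"
      using ab by (simp add: lincomb_index)
  qed (use assms(2) in auto)
  then show ?thesis unfolding mats_span_def by (metis (mono_tags, lifting) mem_Collect_eq)
qed

lemma span_carrier: "X \<in> mats_span p Xs \<Longrightarrow> X \<in> carrier_mat p p"
  unfolding mats_span_def by auto

lemma lincomb_lincomb:
  assumes "\<And>j. j < length Ys \<Longrightarrow> Ys ! j = mat_lincomb p (T j) Zs"
  shows "mat_lincomb p w Ys = mat_lincomb p (\<lambda>k. \<Sum>j<length Ys. w j * T j k) Zs"
proof (rule eq_matI)
  fix a b assume "a < dim_row (mat_lincomb p (\<lambda>k. \<Sum>j<length Ys. w j * T j k) Zs)"
    "b < dim_col (mat_lincomb p (\<lambda>k. \<Sum>j<length Ys. w j * T j k) Zs)"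
  then have ab: "a < p" "b < p" by auto
  have "mat_lincomb p w Ys $$ (a,b) = (\<Sum>j<length Ys. w j * (\<Sum>k<length Zs. T j k * Zs ! k $$ (a,b)))"
    using ab assms by (simp add: lincomb_index)
  also have "\<dots> = (\<Sum>j<length Ys. \<Sum>k<length Zs. w j * T j k * Zs ! k $$ (a,b))"
    by (simp add: sum_distrib_left mult.assoc)
  also have "\<dots> = (\<Sum>k<length Zs. \<Sum>j<length Ys. w j * T j k * Zs ! k $$ (a,b))"
    by (rule sum.swap)
  also have "\<dots> = (\<Sum>k<length Zs. (\<Sum>j<length Ys. w j * T j k) * Zs ! k $$ (a,b))"
    by (simp add: sum_distrib_right)
  also have "\<dots> = mat_lincomb p (\<lambda>k. \<Sum>j<length Ys. w j * T j k) Zs $$ (a,b)"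
    using ab by (simp add: lincomb_index)
  finally show "mat_lincomb p w Ys $$ (a,b) = mat_lincomb p (\<lambda>k. \<Sum>j<length Ys. w j * T j k) Zs $$ (a,b)" .
qed auto

lemma span_coeffs:
  assumes "set Ys \<subseteq> mats_span p Zs"
  obtains T where "\<And>j. j < length Ys \<Longrightarrow> Ys ! j = mat_lincomb p (T j) Zs"
proof -
  have "\<forall>j. \<exists>T. j < length Ys \<longrightarrow> Ys ! j = mat_lincomb p T Zs"
    using assms unfolding mats_span_def by (auto simp: subset_iff)
  then obtain T where "\<forall>j. j < length Ys \<longrightarrow> Ys ! j = mat_lincomb p (T j) Zs" by metis
  then show ?thesis using that by blast
qed

lemma span_trans:
  assumes "set Ys \<subseteq> mats_span p Zs"
  shows "mats_span p Ys \<subseteq> mats_span p Zs"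
proof
  fix X assume "X \<in> mats_span p Ys"
  then obtain w where X: "X = mat_lincomb p w Ys" unfolding mats_span_def by auto
  obtain T where T: "\<And>j. j < length Ys \<Longrightarrow> Ys ! j = mat_lincomb p (T j) Zs"
    using span_coeffs[OF assms] by blast
  show "X \<in> mats_span p Zs" using lincomb_lincomb[OF T, of w] unfolding X mats_span_def by auto
qed

lemma lincomb_append_index:
  assumes "a < p" "b < p"
  shows "mat_lincomb p w (Xs @ [X]) $$ (a,b) =
    (\<Sum>k<length Xs. w k * Xs ! k $$ (a,b)) + w (length Xs) * X $$ (a,b)"
  using assms by (simp add: lincomb_index nth_append)

lemma indep_append:
  assumes ind: "mats_lin_indep p Xs" and X: "X \<in> carrier_mat p p" and nsp: "X \<notin> mats_span p Xs"
  shows "mats_lin_indep p (Xs @ [X])"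
  unfolding mats_lin_indep_def
proof (rule allI, rule impI)
  fix w assume w0: "mat_lincomb p w (Xs @ [X]) = 0\<^sub>m p p"
  let ?n = "length Xs"
  have E: "(\<Sum>k<?n. w k * Xs ! k $$ (a,b)) + w ?n * X $$ (a,b) = 0" if "a < p" "b < p" for a b
  proof -
    have "mat_lincomb p w (Xs @ [X]) $$ (a,b) = 0" using w0 that by simp
    then show ?thesis using lincomb_append_index[OF that] by simp
  qed
  have wn: "w ?n = 0"
  proof (rule ccontr)
    assume wn: "w ?n \<noteq> 0"
    have "X = mat_lincomb p (\<lambda>k. - w k / w ?n) Xs"
    proof (rule eq_matI)
      fix a b assume "a < dim_row (mat_lincomb p (\<lambda>k. - w k / w ?n) Xs)"
        "b < dim_col (mat_lincomb p (\<lambda>k. - w k / w ?n) Xs)"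
      then have ab: "a < p" "b < p" by auto
      have "X $$ (a,b) = - (\<Sum>k<?n. w k * Xs ! k $$ (a,b)) / w ?n"
        using E[OF ab] wn by (simp add: field_simps add_eq_0_iff)
      also have "\<dots> = (\<Sum>k<?n. (- w k / w ?n) * Xs ! k $$ (a,b))"
        by (simp add: sum_divide_distrib sum_negf)
      finally show "X $$ (a,b) = mat_lincomb p (\<lambda>k. - w k / w ?n) Xs $$ (a,b)"
        using ab by (simp add: lincomb_index)
    qed (use X in auto)
    then show False using nsp unfolding mats_span_def by auto
  qed
  have "mat_lincomb p w Xs = 0\<^sub>m p p"
  proof (rule eq_matI)
    fix a b assume "a < dim_row (0\<^sub>m p p :: real mat)" "b < dim_col (0\<^sub>m p p :: real mat)"
    then have ab: "a < p" "b < p" by auto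
    show "mat_lincomb p w Xs $$ (a,b) = 0\<^sub>m p p $$ (a,b)"
      using E[OF ab] wn ab by (simp add: lincomb_index)
  qed auto
  then have "\<forall>k<?n. w k = 0" using ind unfolding mats_lin_indep_def by blast
  then show "\<forall>k<length (Xs @ [X]). w k = 0" using wn by (auto simp: less_Suc_eq)
qed

lemma wide_kernel:
  fixes T :: "nat \<Rightarrow> nat \<Rightarrow> real"
  assumes "b < a"
  obtains v where "v \<in> carrier_vec a" "v \<noteq> 0\<^sub>v a" "\<And>j. j < b \<Longrightarrow> (\<Sum>i<a. T i j * v $ i) = 0"
proof -
  define c where "c = (\<lambda>j. vec a (\<lambda>i. T i j))"
  define M where "M = mat\<^sub>r a a (\<lambda>j. if j = a - 1 then 0\<^sub>v a else c j)"
  have M: "M \<in> carrier_mat a a" unfolding M_def by auto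
  have "det M = 0" unfolding M_def
    by (rule det_row_0) (use assms in \<open>auto simp: c_def\<close>)
  then obtain v where v: "v \<in> carrier_vec a" "v \<noteq> 0\<^sub>v a" "M *\<^sub>v v = 0\<^sub>v a"
    using det_0_iff_vec_prod_zero_field[OF M] by blast
  have "(\<Sum>i<a. T i j * v $ i) = 0" if j: "j < b" for j
  proof -
    have ja: "j < a" "j \<noteq> a - 1" using j assms by auto
    have "(M *\<^sub>v v) $ j = 0" using v(3) ja by simp
    moreover have "(M *\<^sub>v v) $ j = c j \<bullet> v" using ja unfolding M_def by (simp add: c_def)
    moreover have "c j \<bullet> v = (\<Sum>i<a. T i j * v $ i)"
      using v(1) unfolding c_def scalar_prod_def by (simp add: atLeast0LessThan)
    ultimately show ?thesis by simp
  qed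
  then show ?thesis using that v(1,2) by blast
qed

lemma indep_le:
  assumes ind: "mats_lin_indep p Xs" and sp: "set Xs \<subseteq> mats_span p Ys"
  shows "length Xs \<le> length Ys"
proof (rule ccontr)
  assume "\<not> ?thesis"
  then have lt: "length Ys < length Xs" by simp
  obtain T where T: "\<And>i. i < length Xs \<Longrightarrow> Xs ! i = mat_lincomb p (T i) Ys"
    using span_coeffs[OF sp] by blast
  obtain v where v: "v \<in> carrier_vec (length Xs)" "v \<noteq> 0\<^sub>v (length Xs)"
    "\<And>j. j < length Ys \<Longrightarrow> (\<Sum>i<length Xs. T i j * v $ i) = 0"
    using wide_kernel[OF lt] by blast
  have "mat_lincomb p (\<lambda>i. v $ i) Xs = mat_lincomb p (\<lambda>k. \<Sum>j<length Xs. v $ j * T j k) Ys"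
    by (rule lincomb_lincomb[OF T])
  also have "\<dots> = mat_lincomb p (\<lambda>k. 0) Ys"
    unfolding mat_lincomb_def using v(3)
    by (intro cong_mat refl) (auto simp: mult.commute)
  also have "\<dots> = 0\<^sub>m p p" unfolding mat_lincomb_def by (intro eq_matI) auto
  finally have "\<forall>i<length Xs. v $ i = 0" using ind unfolding mats_lin_indep_def by blast
  then have "v = 0\<^sub>v (length Xs)" using v(1) by (intro eq_vecI) auto
  then show False using v(2) by simp
qed

lemma basis_length_unique:
  assumes "is_mat_basis p S Us" "is_mat_basis p S Ws"
  shows "length Us = length Ws"
proof -
  have "set Us \<subseteq> S" "set Ws \<subseteq> S"
    using assms span_nth unfolding is_mat_basis_def by (metis in_set_conv_nth subset_iff)+
  then have "set Us \<subseteq> mats_span p Ws" "set Ws \<subseteq> mats_span p Us"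
    using assms unfolding is_mat_basis_def by auto
  then show ?thesis using indep_le assms unfolding is_mat_basis_def by (meson le_antisym)
qed

lemma mat_dim_eq:
  assumes "is_mat_basis p S Us"
  shows "mat_dim p S = length Us"
  unfolding mat_dim_def
proof (rule the_equality)
  show "\<exists>Ws. is_mat_basis p S Ws \<and> length Ws = length Us" using assms by blast
next
  fix n assume "\<exists>Ws. is_mat_basis p S Ws \<and> length Ws = n"
  then show "n = length Us" using basis_length_unique[OF assms] by auto
qed

lemma ZGC_sym:
  assumes "x \<in> ZGC p E colr"
  shows "x \<in> carrier_mat p p" "transpose_mat x = x"
  using assms unfolding ZGC_def sym_mat_def by auto

lemma part_sum: "ordered_partition p ns \<Longrightarrow> sum_list ns = p"
  unfolding ordered_partition_def by simp

lemma cbc_Z2: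
  assumes "cBC_space ns Z"
  shows "\<forall>x\<in>Z. \<forall>y\<in>Z. block_diag ns x * block_diag ns y \<in> Z"
proof -
  have "let p = sum_list ns; r = length ns in
      (\<forall>x\<in>Z. \<forall>y\<in>Z. block_diag ns x * block_diag ns y \<in> Z)"
    using assms unfolding cBC_space_def by (simp only: Let_def) (elim conjE)
  then show ?thesis by (simp only: Let_def)
qed

lemma block_diag_M:
  assumes "x \<in> Mspace ns i Z" "x \<in> carrier_mat (sum_list ns) (sum_list ns)"
  shows "block_diag ns x = x"
proof (rule eq_matI)
  fix a b assume ab: "a < dim_row x" "b < dim_col x"
  then have ab': "a < sum_list ns" "b < sum_list ns" using assms(2) by auto
  have "blk ns b \<noteq> blk ns a \<Longrightarrow> x $$ (a,b) = 0"
    using assms(1) ab' unfolding Mspace_def by auto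
  then show "block_diag ns x $$ (a,b) = x $$ (a,b)"
    using ab' unfolding block_diag_def by auto
qed (use assms(2) in \<open>auto simp: block_diag_def\<close>)

lemma M_commute:
  assumes part: "ordered_partition p ns" and cbc: "cBC_space ns (ZGC p E colr)"
    and x: "x \<in> Mspace ns i (ZGC p E colr)" and y: "y \<in> Mspace ns i (ZGC p E colr)"
  shows "x * y = y * x"
proof -
  let ?Z = "ZGC p E colr"
  have xZ: "x \<in> ?Z" and yZ: "y \<in> ?Z" using x y unfolding Mspace_def by auto
  have xc: "x \<in> carrier_mat p p" "transpose_mat x = x" using ZGC_sym[OF xZ] by auto
  have yc: "y \<in> carrier_mat p p" "transpose_mat y = y" using ZGC_sym[OF yZ] by auto
  have sp: "sum_list ns = p" using part_sum[OF part] .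
  have "block_diag ns x * block_diag ns y \<in> ?Z" using cbc_Z2[OF cbc] xZ yZ by blast
  then have "x * y \<in> ?Z" using block_diag_M[OF x] block_diag_M[OF y] xc yc sp by simp
  then have "transpose_mat (x * y) = x * y" using ZGC_sym by blast
  moreover have "transpose_mat (x * y) = y * x"
    using transpose_mult[OF xc(1) yc(1)] xc yc by simp
  ultimately show ?thesis by simp
qed

lemma frame_props:
  assumes frame: "jordan_frame ns i Z cs d"
  shows "\<And>\<beta>. \<beta> < d \<Longrightarrow> cs \<beta> \<in> Mspace ns i Z"
    "\<And>\<beta>. \<beta> < d \<Longrightarrow> cs \<beta> \<noteq> 0\<^sub>m (sum_list ns) (sum_list ns)"
    "\<And>\<beta> \<gamma>. \<beta> < d \<Longrightarrow> \<gamma> < d \<Longrightarrow> cs \<beta> * cs \<gamma> = (if \<beta> = \<gamma> then cs \<beta> else 0\<^sub>m (sum_list ns) (sum_list ns))"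
  using assms unfolding jordan_frame_def orth_idem_family_def by auto

lemma msum_mult_zero:
  assumes cs: "\<And>\<beta>. \<beta> \<in> S \<Longrightarrow> cs \<beta> * C = 0\<^sub>m p p" "\<And>\<beta>. \<beta> \<in> S \<Longrightarrow> cs \<beta> \<in> carrier_mat p p"
    and C: "C \<in> carrier_mat p p" and fin: "finite S"
  shows "msum p cs S * C = 0\<^sub>m p p"
proof (rule eq_matI)
  fix a b assume "a < dim_row (0\<^sub>m p p :: real mat)" "b < dim_col (0\<^sub>m p p :: real mat)"
  then have ab: "a < p" "b < p" by auto
  have "(msum p cs S * C) $$ (a,b) = (\<Sum>k<p. (\<Sum>\<beta>\<in>S. cs \<beta> $$ (a,k)) * C $$ (k,b))"
    using ab C unfolding msum_def by (simp add: scalar_prod_def atLeast0LessThan)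
  also have "\<dots> = (\<Sum>\<beta>\<in>S. \<Sum>k<p. cs \<beta> $$ (a,k) * C $$ (k,b))"
    by (simp add: sum_distrib_right sum.swap[where A="{..<p}"])
  also have "\<dots> = (\<Sum>\<beta>\<in>S. (cs \<beta> * C) $$ (a,b))"
  proof (rule sum.cong[OF refl])
    fix \<beta> assume "\<beta> \<in> S"
    then show "(\<Sum>k<p. cs \<beta> $$ (a,k) * C $$ (k,b)) = (cs \<beta> * C) $$ (a,b)"
      using cs(2)[OF \<open>\<beta> \<in> S\<close>] ab C by (simp add: scalar_prod_def atLeast0LessThan)
  qed
  also have "\<dots> = 0" using cs(1) ab by simp
  finally show "(msum p cs S * C) $$ (a,b) = 0\<^sub>m p p $$ (a,b)" using ab by simp
qed (use C in \<open>auto simp: msum_def\<close>)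

lemma lincomb_mult_right:
  assumes "set Bs \<subseteq> carrier_mat p p" "C \<in> carrier_mat p p"
  shows "mat_lincomb p w Bs * C = mat_lincomb p w (map (\<lambda>B. B * C) Bs)"
proof (rule eq_matI)
  fix a b assume "a < dim_row (mat_lincomb p w (map (\<lambda>B. B * C) Bs))"
    "b < dim_col (mat_lincomb p w (map (\<lambda>B. B * C) Bs))"
  then have ab: "a < p" "b < p" by auto
  have Bk: "Bs ! k \<in> carrier_mat p p" if "k < length Bs" for k using assms(1) that by auto
  have "(mat_lincomb p w Bs * C) $$ (a,b) = (\<Sum>e<p. (\<Sum>k<length Bs. w k * Bs ! k $$ (a,e)) * C $$ (e,b))"
    using ab assms(2) by (simp add: scalar_prod_def atLeast0LessThan lincomb_index)
  also have "\<dots> = (\<Sum>k<length Bs. w k * (\<Sum>e<p. Bs ! k $$ (a,e) * C $$ (e,b)))"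
    by (simp add: sum_distrib_right sum_distrib_left sum.swap[where A="{..<p}"] mult.assoc)
  also have "\<dots> = (\<Sum>k<length Bs. w k * (Bs ! k * C) $$ (a,b))"
  proof (rule sum.cong[OF refl])
    fix k assume "k \<in> {..<length Bs}"
    then have "Bs ! k \<in> carrier_mat p p" using Bk by simp
    then show "w k * (\<Sum>e<p. Bs ! k $$ (a,e) * C $$ (e,b)) = w k * (Bs ! k * C) $$ (a,b)"
      using ab assms(2) by (simp add: scalar_prod_def atLeast0LessThan)
  qed
  also have "\<dots> = mat_lincomb p w (map (\<lambda>B. B * C) Bs) $$ (a,b)"
    using ab by (simp add: lincomb_index)
  finally show "(mat_lincomb p w Bs * C) $$ (a,b) = mat_lincomb p w (map (\<lambda>B. B * C) Bs) $$ (a,b)" .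
qed (use assms(2) in auto)

lemma h_char:
  assumes part: "ordered_partition p ns" and cbc: "cBC_space ns (ZGC p E colr)"
    and frame: "jordan_frame ns i (ZGC p E colr) cs d" and alpha: "\<alpha> < d"
    and Lb: "is_mat_basis p (Lspace ns i (ZGC p E colr)) Bs"
  shows "hspace ns i (ZGC p E colr) cs d \<alpha> = mats_span p (map (\<lambda>B. B * cs \<alpha>) Bs)"
proof -
  let ?Z = "ZGC p E colr"
  let ?c = "cs \<alpha>"
  have sp: "sum_list ns = p" using part_sum[OF part] .
  have csM: "\<And>\<beta>. \<beta> < d \<Longrightarrow> cs \<beta> \<in> Mspace ns i ?Z" using frame_props(1)[OF frame] .
  have csC: "\<And>\<beta>. \<beta> < d \<Longrightarrow> cs \<beta> \<in> carrier_mat p p"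
    using csM ZGC_sym(1) unfolding Mspace_def by blast
  have cC: "?c \<in> carrier_mat p p" using csC alpha .
  have orth: "\<And>\<beta>. \<beta> \<in> {\<alpha><..<d} \<Longrightarrow> cs \<beta> * ?c = 0\<^sub>m p p"
    using frame_props(3)[OF frame] alpha sp by auto
  have ms0: "msum p cs {\<alpha><..<d} * ?c = 0\<^sub>m p p"
    by (rule msum_mult_zero[OF orth _ cC]) (auto intro: csC)
  have msC: "msum p cs {\<alpha><..<d} \<in> carrier_mat p p" unfolding msum_def by simp
  have zero_term: "msum p cs {\<alpha><..<d} * x * ?c = 0\<^sub>m p p" if x: "x \<in> Mspace ns i ?Z" for x
  proof -
    have xC: "x \<in> carrier_mat p p" using x ZGC_sym(1) unfolding Mspace_def by blast
    have "x * ?c = ?c * x" using M_commute[OF part cbc x csM[OF alpha]] .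
    have "msum p cs {\<alpha><..<d} * x * ?c = msum p cs {\<alpha><..<d} * (x * ?c)"
      using msC xC cC by simp
    also have "\<dots> = msum p cs {\<alpha><..<d} * (?c * x)" using \<open>x * ?c = ?c * x\<close> by simp
    also have "\<dots> = (msum p cs {\<alpha><..<d} * ?c) * x"
      using msC xC cC by simp
    also have "\<dots> = 0\<^sub>m p p" using ms0 xC by simp
    finally show ?thesis .
  qed
  have BC: "set Bs \<subseteq> carrier_mat p p" using Lb unfolding is_mat_basis_def by auto
  have Lspan: "Lspace ns i ?Z = mats_span p Bs" using Lb unfolding is_mat_basis_def by auto
  show ?thesis
  proof (intro equalityI subsetI)
    fix X assume "X \<in> hspace ns i ?Z cs d \<alpha>"
    then obtain x y where X: "X = msum p cs {\<alpha><..<d} * x * ?c + y * ?c"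
      and x: "x \<in> Mspace ns i ?Z" and y: "y \<in> Lspace ns i ?Z"
      unfolding hspace_def sp by blast
    obtain w where yw: "y = mat_lincomb p w Bs" using y Lspan unfolding mats_span_def by auto
    have yc: "y * ?c \<in> carrier_mat p p" unfolding yw by (rule mult_carrier_mat[OF lincomb_carrier cC])
    have "X = y * ?c" using X zero_term[OF x] yc by simp
    also have "\<dots> = mat_lincomb p w (map (\<lambda>B. B * ?c) Bs)" using lincomb_mult_right[OF BC cC] yw by simp
    finally show "X \<in> mats_span p (map (\<lambda>B. B * ?c) Bs)" unfolding mats_span_def by auto
  next
    fix X assume "X \<in> mats_span p (map (\<lambda>B. B * ?c) Bs)"
    then obtain w where Xw: "X = mat_lincomb p w (map (\<lambda>B. B * ?c) Bs)"
      unfolding mats_span_def by auto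
    let ?y = "mat_lincomb p w Bs"
    have y: "?y \<in> Lspace ns i ?Z" using Lspan unfolding mats_span_def by auto
    have yc: "?y * ?c \<in> carrier_mat p p" by (rule mult_carrier_mat[OF lincomb_carrier cC])
    have "X = msum p cs {\<alpha><..<d} * ?c * ?c + ?y * ?c"
      using Xw zero_term[OF csM[OF alpha]] lincomb_mult_right[OF BC cC] yc by simp
    then show "X \<in> hspace ns i ?Z cs d \<alpha>"
      unfolding hspace_def sp using y csM[OF alpha] by blast
  qed
qed

lemma aip_one: "X \<in> carrier_mat p p \<Longrightarrow> aip (1\<^sub>m p) X Y = mtrace (X * transpose_mat Y)"
  unfolding aip_def by simp

lemma lincomb_cong:
  "(\<And>k. k < length Fs \<Longrightarrow> w k = w' k) \<Longrightarrow> mat_lincomb p w Fs = mat_lincomb p w' Fs"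
  unfolding mat_lincomb_def by (intro cong_mat refl) auto

lemma orthonormal_aip:
  assumes "orthonormal_mats fs" "set fs \<subseteq> carrier_mat p p" "j < length fs" "k < length fs"
  shows "aip (1\<^sub>m p) (fs!j) (fs!k) = (if j = k then 1 else 0)"
proof -
  have "fs!j \<in> carrier_mat p p" using assms(2,3) by auto
  then have "aip (1\<^sub>m p) (fs!j) (fs!k) = mtrace (fs!j * transpose_mat (fs!k))" by (rule aip_one)
  then show ?thesis using assms(1,3,4) unfolding orthonormal_mats_def by simp
qed

lemma coord:
  assumes on: "orthonormal_mats fs" and fC: "set fs \<subseteq> carrier_mat p p" and X: "X \<in> mats_span p fs"
  shows "X = mat_lincomb p (\<lambda>j. aip (1\<^sub>m p) X (fs!j)) fs"
proof -
  obtain w where Xw: "X = mat_lincomb p w fs" using X unfolding mats_span_def by auto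
  have fj: "fs ! j \<in> carrier_mat p p" if "j < length fs" for j using fC that by auto
  have "aip (1\<^sub>m p) X (fs!j) = w j" if j: "j < length fs" for j
  proof -
    have "aip (1\<^sub>m p) X (fs!j) = (\<Sum>k<length fs. w k * aip (1\<^sub>m p) (fs!k) (fs!j))"
      unfolding Xw by (rule aip_lincomb_left[OF one_carrier_mat fC fj[OF j]])
    also have "\<dots> = (\<Sum>k<length fs. if k = j then w k else 0)"
      using orthonormal_aip[OF on fC _ j] by (intro sum.cong refl) auto
    also have "\<dots> = w j" using j by (simp add: sum.delta)
    finally show ?thesis .
  qed
  then have eq: "mat_lincomb p (\<lambda>j. aip (1\<^sub>m p) X (fs!j)) fs = mat_lincomb p w fs"
    by (intro lincomb_cong) simp
  show ?thesis using trans[OF Xw sym[OF eq]] .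
qed

lemma psi_coord:
  assumes B: "B \<in> carrier_mat p p" and F: "set Fs \<subseteq> carrier_mat p p"
    and T: "T \<in> carrier_mat (length Ws) (length Fs)"
    and W: "\<And>k. k < length Ws \<Longrightarrow> Ws ! k = mat_lincomb p (\<lambda>j. T $$ (k,j)) Fs"
  shows "psi_mat B Ws = T * psi_mat B Fs * transpose_mat T"
proof (rule eq_matI)
  fix k l assume "k < dim_row (T * psi_mat B Fs * transpose_mat T)" "l < dim_col (T * psi_mat B Fs * transpose_mat T)"
  then have kl: "k < length Ws" "l < length Ws" using T by auto
  have Fj: "Fs ! j \<in> carrier_mat p p" if "j < length Fs" for j using F that by auto
  have "psi_mat B Ws $$ (k,l) = aip B (Ws!k) (Ws!l)" using kl by (simp add: psi_index)
  also have "\<dots> = (\<Sum>j<length Fs. T $$ (k,j) * aip B (Fs!j) (Ws!l))"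
    unfolding W[OF kl(1)] by (rule aip_lincomb_left[OF B F]) (simp add: W[OF kl(2)])
  also have "\<dots> = (\<Sum>j<length Fs. T $$ (k,j) * (\<Sum>j'<length Fs. T $$ (l,j') * aip B (Fs!j) (Fs!j')))"
    unfolding W[OF kl(2)] using aip_lincomb_right[OF B F] Fj by simp
  also have "\<dots> = (\<Sum>j<length Fs. T $$ (k,j) * (\<Sum>i<length Fs. psi_mat B Fs $$ (j,i) * T $$ (l,i)))"
  proof (rule sum.cong[OF refl])
    fix j assume j: "j \<in> {..<length Fs}"
    have "(\<Sum>j'<length Fs. T $$ (l,j') * aip B (Fs!j) (Fs!j')) = (\<Sum>i<length Fs. psi_mat B Fs $$ (j,i) * T $$ (l,i))"
    proof (rule sum.cong[OF refl])
      fix i assume i: "i \<in> {..<length Fs}"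
      show "T $$ (l,i) * aip B (Fs!j) (Fs!i) = psi_mat B Fs $$ (j,i) * T $$ (l,i)"
        using i j by (simp add: psi_index)
    qed
    then show "T $$ (k,j) * (\<Sum>j'<length Fs. T $$ (l,j') * aip B (Fs!j) (Fs!j')) =
      T $$ (k,j) * (\<Sum>i<length Fs. psi_mat B Fs $$ (j,i) * T $$ (l,i))" by simp
  qed
  also have "\<dots> = (T * (psi_mat B Fs * transpose_mat T)) $$ (k,l)"
    using kl T by (simp add: scalar_prod_def atLeast0LessThan)
  also have "T * (psi_mat B Fs * transpose_mat T) = T * psi_mat B Fs * transpose_mat T"
    using assoc_mult_mat[OF T psi_carrier, of "transpose_mat T" "length Ws"] T by simp
  finally show "psi_mat B Ws $$ (k,l) = (T * psi_mat B Fs * transpose_mat T) $$ (k,l)" .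
qed (use T in auto)

lemma psi_one_orthonormal:
  assumes "orthonormal_mats fs" "set fs \<subseteq> carrier_mat p p"
  shows "psi_mat (1\<^sub>m p) fs = 1\<^sub>m (length fs)"
  by (rule eq_matI) (use orthonormal_aip[OF assms] in \<open>auto simp: psi_index\<close>)

lemma gram_index: "t < length Us \<Longrightarrow> s < length Us \<Longrightarrow>
  gram_mat Us $$ (t,s) = mtrace (Us ! t * transpose_mat (Us ! s))"
  unfolding gram_mat_def by simp

lemma gram_psi_one:
  assumes "set Us \<subseteq> carrier_mat p p"
  shows "gram_mat Us = psi_mat (1\<^sub>m p) Us"
proof (rule eq_matI)
  fix t s assume "t < dim_row (psi_mat (1\<^sub>m p) Us)" "s < dim_col (psi_mat (1\<^sub>m p) Us)"
  then have ts: "t < length Us" "s < length Us" by auto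
  then have "Us ! t \<in> carrier_mat p p" using assms by auto
  then show "gram_mat Us $$ (t,s) = psi_mat (1\<^sub>m p) Us $$ (t,s)"
    using ts by (simp add: gram_index psi_index aip_one)
qed (auto simp: gram_mat_def)

lemma aip_zero_right: "A \<in> carrier_mat p p \<Longrightarrow> X \<in> carrier_mat p p \<Longrightarrow> aip A X (0\<^sub>m p p) = 0"
  by (simp add: aip_sum)

lemma gram_indep:
  assumes UC: "set Ws \<subseteq> carrier_mat p p" and d: "det (psi_mat (1\<^sub>m p) Ws) \<noteq> 0"
  shows "mats_lin_indep p Ws"
  unfolding mats_lin_indep_def
proof (rule allI, rule impI)
  fix w assume w0: "mat_lincomb p w Ws = 0\<^sub>m p p"
  let ?m = "length Ws"
  let ?v = "vec ?m w"
  have Wk: "Ws ! k \<in> carrier_mat p p" if "k < ?m" for k using UC that by auto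
  have "psi_mat (1\<^sub>m p) Ws *\<^sub>v ?v = 0\<^sub>v ?m"
  proof (rule eq_vecI)
    fix k assume "k < dim_vec (0\<^sub>v ?m :: real vec)"
    then have k: "k < ?m" by simp
    have "(psi_mat (1\<^sub>m p) Ws *\<^sub>v ?v) $ k = (\<Sum>l<?m. w l * aip (1\<^sub>m p) (Ws!k) (Ws!l))"
      using k by (simp add: scalar_prod_def atLeast0LessThan psi_index mult.commute)
    also have "\<dots> = aip (1\<^sub>m p) (Ws!k) (mat_lincomb p w Ws)"
      using aip_lincomb_right[OF one_carrier_mat UC Wk[OF k]] by simp
    also have "\<dots> = 0" using w0 aip_zero_right[OF one_carrier_mat Wk[OF k]] by simp
    finally show "(psi_mat (1\<^sub>m p) Ws *\<^sub>v ?v) $ k = 0\<^sub>v ?m $ k" using k by simp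
  qed simp
  moreover have vc: "?v \<in> carrier_vec ?m" by simp
  ultimately have "?v = 0\<^sub>v ?m"
    using det_0_iff_vec_prod_zero_field[OF psi_carrier[of "1\<^sub>m p" Ws]] d by blast
  then show "\<forall>k<?m. w k = 0" by (metis index_vec index_zero_vec(1))
qed

lemma append_span_le:
  assumes fC: "set fs \<subseteq> carrier_mat p p" and find: "mats_lin_indep p fs"
    and Wi: "mats_lin_indep p Ws" and WC: "set Ws \<subseteq> carrier_mat p p"
    and Wh: "set Ws \<subseteq> mats_span p fs" and len: "length Ws = length fs"
  shows "mats_span p Ws = mats_span p fs"
proof
  show "mats_span p Ws \<subseteq> mats_span p fs" by (rule span_trans[OF Wh])
  show "mats_span p fs \<subseteq> mats_span p Ws"
  proof
    fix X assume X: "X \<in> mats_span p fs"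
    show "X \<in> mats_span p Ws"
    proof (rule ccontr)
      assume nX: "X \<notin> mats_span p Ws"
      have "mats_lin_indep p (Ws @ [X])"
        by (rule indep_append[OF Wi span_carrier[OF X] nX])
      moreover have "set (Ws @ [X]) \<subseteq> mats_span p fs" using Wh X by auto
      ultimately have "length (Ws @ [X]) \<le> length fs" by (rule indep_le)
      then show False using len by simp
    qed
  qed
qed

lemma det_sandwich:
  assumes T: "T \<in> carrier_mat n n" and P: "P \<in> carrier_mat n n"
  shows "det (T * P * transpose_mat T) = det T * det P * det T"
proof -
  have "det (T * P * transpose_mat T) = det (T * P) * det (transpose_mat T)"
    by (rule det_mult[of _ n]) (use T P in auto)
  also have "\<dots> = det T * det P * det T"
    using det_mult[OF T P] det_transpose[OF T] by simp
  finally show ?thesis .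
qed

lemma coord_setup:
  assumes fC: "set fs \<subseteq> carrier_mat p p" and on: "orthonormal_mats fs"
    and Wh: "set Ws \<subseteq> mats_span p fs"
  defines "T \<equiv> mat (length Ws) (length fs) (\<lambda>(k,j). aip (1\<^sub>m p) (Ws!k) (fs!j))"
  shows "T \<in> carrier_mat (length Ws) (length fs)"
    "\<And>k. k < length Ws \<Longrightarrow> Ws ! k = mat_lincomb p (\<lambda>j. T $$ (k,j)) fs"
proof -
  show "T \<in> carrier_mat (length Ws) (length fs)" unfolding T_def by simp
  fix k assume k: "k < length Ws"
  then have "Ws ! k \<in> mats_span p fs" using Wh by auto
  then have "Ws ! k = mat_lincomb p (\<lambda>j. aip (1\<^sub>m p) (Ws!k) (fs!j)) fs" by (rule coord[OF on fC])
  also have "\<dots> = mat_lincomb p (\<lambda>j. T $$ (k,j)) fs"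
    by (rule lincomb_cong) (use k in \<open>simp add: T_def\<close>)
  finally show "Ws ! k = mat_lincomb p (\<lambda>j. T $$ (k,j)) fs" .
qed

lemma main_ts:
  assumes A: "posdef_mat p A"
    and fC: "set fs \<subseteq> carrier_mat p p" and on: "orthonormal_mats fs" and find: "mats_lin_indep p fs"
    and WC: "set Ws \<subseteq> carrier_mat p p" and Wh: "set Ws \<subseteq> mats_span p fs"
    and len: "length Ws = length fs"
    and dG: "det (psi_mat (1\<^sub>m p) Ws) \<noteq> 0"
  shows "mats_lin_indep p Ws" "mats_span p Ws = mats_span p fs"
    "posdef_mat (length fs) (psi_mat A Ws)"
    "det (psi_mat A fs) = det (psi_mat A Ws) / det (psi_mat (1\<^sub>m p) Ws)"
proof -
  let ?n = "length fs"
  have Ac: "A \<in> carrier_mat p p" using posdef_D(1)[OF A] .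
  show Wi: "mats_lin_indep p Ws" by (rule gram_indep[OF WC dG])
  show "mats_span p Ws = mats_span p fs" by (rule append_span_le[OF fC find Wi WC Wh len])
  show "posdef_mat ?n (psi_mat A Ws)" using psi_posdef[OF A WC Wi] len by simp
  define T where "T = mat (length Ws) (length fs) (\<lambda>(k,j). aip (1\<^sub>m p) (Ws!k) (fs!j))"
  have TC: "T \<in> carrier_mat (length Ws) ?n" and TW: "\<And>k. k < length Ws \<Longrightarrow> Ws ! k = mat_lincomb p (\<lambda>j. T $$ (k,j)) fs"
    using coord_setup[OF fC on Wh] unfolding T_def by auto
  have TCn: "T \<in> carrier_mat ?n ?n" using TC len by simp
  have PA: "psi_mat A Ws = T * psi_mat A fs * transpose_mat T" by (rule psi_coord[OF Ac fC TC TW])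
  have P1: "psi_mat (1\<^sub>m p) Ws = T * psi_mat (1\<^sub>m p) fs * transpose_mat T"
    by (rule psi_coord[OF one_carrier_mat fC TC TW])
  have d1: "det (psi_mat (1\<^sub>m p) Ws) = det T * det T"
    using P1 det_sandwich[OF TCn, of "psi_mat (1\<^sub>m p) fs"] psi_one_orthonormal[OF on fC] by simp
  have dA: "det (psi_mat A Ws) = det T * det (psi_mat A fs) * det T"
    using PA det_sandwich[OF TCn, of "psi_mat A fs"] by simp
  show "det (psi_mat A fs) = det (psi_mat A Ws) / det (psi_mat (1\<^sub>m p) Ws)"
    using dG d1 dA by simp
qed

lemma aip_smult_left:
  assumes "A \<in> carrier_mat p p" "X \<in> carrier_mat p p" "Y \<in> carrier_mat p p"
  shows "aip A (s \<cdot>\<^sub>m X) Y = s * aip A X Y"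
  using assms by (simp add: aip_sum sum_distrib_left mult_ac)

lemma aip_smult_right:
  assumes "A \<in> carrier_mat p p" "X \<in> carrier_mat p p" "Y \<in> carrier_mat p p"
  shows "aip A X (s \<cdot>\<^sub>m Y) = s * aip A X Y"
  using assms by (simp add: aip_sum sum_distrib_left mult_ac)

lemma inverse_exists:
  assumes M: "M \<in> carrier_mat n n" and d: "det M \<noteq> (0::real)"
  obtains Mi where "mat_inverse M = Some Mi" "M * Mi = 1\<^sub>m n" "Mi * M = 1\<^sub>m n" "Mi \<in> carrier_mat n n"
proof -
  have "M \<in> Units (ring_mat TYPE(real) n ())" by (rule det_non_zero_imp_unit[OF M d])
  moreover have "M \<notin> Units (ring_mat TYPE(real) n ())" if "mat_inverse M = None"
    using mat_inverse(1)[OF M that] .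
  ultimately have "mat_inverse M \<noteq> None" by blast
  then obtain Mi where Mi: "mat_inverse M = Some Mi" by blast
  then show ?thesis using mat_inverse(2)[OF M Mi] that by blast
qed

lemma mtrace_smult: "M \<in> carrier_mat n n \<Longrightarrow> mtrace (s \<cdot>\<^sub>m M) = s * mtrace M"
  unfolding mtrace_def by (simp add: sum_distrib_left)

lemma a_value:
  assumes Ac: "A \<in> carrier_mat p p" and cC: "c \<in> carrier_mat p p" and cc: "c * c = c"
    and mu: "0 \<le> (\<mu>::real)"
  shows "mtrace (A * ((1 / sqrt \<mu>) \<cdot>\<^sub>m c) * ((1 / sqrt \<mu>) \<cdot>\<^sub>m c)) = mtrace (A * c) / \<mu>"
proof -
  let ?s = "1 / sqrt \<mu>"
  have sc: "?s \<cdot>\<^sub>m c \<in> carrier_mat p p" using cC by simp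
  have 1: "A * (?s \<cdot>\<^sub>m c) * (?s \<cdot>\<^sub>m c) = A * ((?s \<cdot>\<^sub>m c) * (?s \<cdot>\<^sub>m c))"
    using Ac sc by simp
  have 2: "(?s \<cdot>\<^sub>m c) * (?s \<cdot>\<^sub>m c) = ?s \<cdot>\<^sub>m (c * (?s \<cdot>\<^sub>m c))"
    by (rule mult_smult_assoc_mat[OF cC sc])
  have 3: "c * (?s \<cdot>\<^sub>m c) = ?s \<cdot>\<^sub>m (c * c)" by (rule mult_smult_distrib[OF cC cC])
  have 4: "A * (?s \<cdot>\<^sub>m (?s \<cdot>\<^sub>m c)) = ?s \<cdot>\<^sub>m (A * (?s \<cdot>\<^sub>m c))"
    by (rule mult_smult_distrib[OF Ac sc])
  have 5: "A * (?s \<cdot>\<^sub>m c) = ?s \<cdot>\<^sub>m (A * c)" by (rule mult_smult_distrib[OF Ac cC])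
  have AcC: "A * c \<in> carrier_mat p p" using Ac cC by simp
  have "mtrace (A * (?s \<cdot>\<^sub>m c) * (?s \<cdot>\<^sub>m c)) = mtrace (?s \<cdot>\<^sub>m (?s \<cdot>\<^sub>m (A * c)))"
    using 1 2 3 4 5 cc by simp
  also have "\<dots> = ?s * (?s * mtrace (A * c))"
  proof -
    have sAc: "?s \<cdot>\<^sub>m (A * c) \<in> carrier_mat p p" using AcC by simp
    show ?thesis by (simp only: mtrace_smult[OF sAc] mtrace_smult[OF AcC])
  qed
  also have "?s * (?s * mtrace (A * c)) = (?s * ?s) * mtrace (A * c)" by simp
  also have "?s * ?s = 1 / \<mu>" using mu by (simp add: real_sqrt_mult_self)
  finally show ?thesis by simp
qed

lemma phi_block:
  assumes fC: "set fs \<subseteq> carrier_mat p p"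
  shows "phi_mat A et fs = four_block_mat (mat 1 1 (\<lambda>_. mtrace (A * et * et)))
      (mat 1 (length fs) (\<lambda>(_,j). aip A et (fs!j)))
      (transpose_mat (mat 1 (length fs) (\<lambda>(_,j). aip A et (fs!j)))) (psi_mat A fs)"
  by (rule eq_matI) (auto simp: phi_mat_def psi_mat_def aip_def)

lemma assoc3: "A \<in> carrier_mat n n \<Longrightarrow> B \<in> carrier_mat n n \<Longrightarrow> C \<in> carrier_mat n n \<Longrightarrow>
  A * B * C = A * (B * C)"
  by (rule assoc_mult_mat)

lemma assoc4:
  assumes "A \<in> carrier_mat n n" "B \<in> carrier_mat n n" "C \<in> carrier_mat n n" "D \<in> carrier_mat n n"
  shows "A * B * C * D = A * (B * (C * D))"
proof -
  have "A * B * C * D = (A * B) * (C * D)" by (rule assoc_mult_mat) (use assms in auto)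
  also have "\<dots> = A * (B * (C * D))" by (rule assoc_mult_mat) (use assms in auto)
  finally show ?thesis .
qed

lemma schur:
  assumes A: "posdef_mat p A"
    and fC: "set fs \<subseteq> carrier_mat p p" and on: "orthonormal_mats fs" and find: "mats_lin_indep p fs"
    and WC: "set Ws \<subseteq> carrier_mat p p" and Wh: "set Ws \<subseteq> mats_span p fs"
    and len: "length Ws = length fs"
    and dG: "det (psi_mat (1\<^sub>m p) Ws) \<noteq> 0"
    and cC: "c \<in> carrier_mat p p" and cc: "c * c = c" and mu: "0 \<le> (\<mu>::real)"
  shows "det (phi_mat A ((1 / sqrt \<mu>) \<cdot>\<^sub>m c) fs) / det (psi_mat A fs) =
     mtrace (A * c) / \<mu> -
     (mat 1 (length fs) (\<lambda>(_, k). mtrace (A * c * transpose_mat (Ws ! k)) / sqrt \<mu>) *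
      the (mat_inverse (psi_mat A Ws)) *
      transpose_mat (mat 1 (length fs) (\<lambda>(_, k). mtrace (A * c * transpose_mat (Ws ! k)) / sqrt \<mu>))) $$ (0,0)"
proof -
  let ?n = "length fs"
  let ?s = "1 / sqrt \<mu>"
  define et where "et = ?s \<cdot>\<^sub>m c"
  define V where "V = mat 1 ?n (\<lambda>(_, k). mtrace (A * c * transpose_mat (Ws ! k)) / sqrt \<mu>)"
  define \<psi> where "\<psi> = psi_mat A fs"
  define \<Psi> where "\<Psi> = psi_mat A Ws"
  have Ac: "A \<in> carrier_mat p p" using posdef_D(1)[OF A] .
  have etC: "et \<in> carrier_mat p p" unfolding et_def using cC by simp
  have Fj: "fs ! j \<in> carrier_mat p p" if "j < ?n" for j using fC that by auto
  have \<psi>C: "\<psi> \<in> carrier_mat ?n ?n" unfolding \<psi>_def by simp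
  have \<Psi>C: "\<Psi> \<in> carrier_mat ?n ?n" unfolding \<Psi>_def using psi_carrier[of A Ws] by (simp only: len)
  have d\<psi>: "det \<psi> \<noteq> 0" unfolding \<psi>_def by (rule posdef_det[OF psi_posdef[OF A fC find]])
  have d\<Psi>: "det \<Psi> \<noteq> 0" unfolding \<Psi>_def by (rule posdef_det[OF main_ts(3)[OF A fC on find WC Wh len dG]])
  define T where "T = mat (length Ws) (length fs) (\<lambda>(k,j). aip (1\<^sub>m p) (Ws!k) (fs!j))"
  have TC0: "T \<in> carrier_mat (length Ws) ?n" and TW: "\<And>k. k < length Ws \<Longrightarrow> Ws ! k = mat_lincomb p (\<lambda>j. T $$ (k,j)) fs"
    using coord_setup[OF fC on Wh] unfolding T_def by auto
  have TC: "T \<in> carrier_mat ?n ?n" using TC0 len by simp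
  have PA: "\<Psi> = T * \<psi> * transpose_mat T" unfolding \<Psi>_def \<psi>_def by (rule psi_coord[OF Ac fC TC0 TW])
  have P1: "psi_mat (1\<^sub>m p) Ws = T * psi_mat (1\<^sub>m p) fs * transpose_mat T"
    by (rule psi_coord[OF one_carrier_mat fC TC0 TW])
  have "det (psi_mat (1\<^sub>m p) Ws) = det T * det T"
    using P1 det_sandwich[OF TC, of "psi_mat (1\<^sub>m p) fs"] psi_one_orthonormal[OF on fC] by simp
  then have dT: "det T \<noteq> 0" using dG by auto
  obtain \<Psi>i where \<Psi>i: "mat_inverse \<Psi> = Some \<Psi>i" "\<Psi> * \<Psi>i = 1\<^sub>m ?n" "\<Psi>i * \<Psi> = 1\<^sub>m ?n" "\<Psi>i \<in> carrier_mat ?n ?n"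
    using inverse_exists[OF \<Psi>C d\<Psi>] by blast
  obtain Ti where Ti: "T * Ti = 1\<^sub>m ?n" "Ti * T = 1\<^sub>m ?n" "Ti \<in> carrier_mat ?n ?n"
    using inverse_exists[OF TC dT] by blast
  define vr where "vr = mat 1 ?n (\<lambda>(_, j). aip A et (fs!j))"
  have vrC: "vr \<in> carrier_mat 1 ?n" unfolding vr_def by simp
  have V_eq: "V = vr * transpose_mat T"
  proof (rule eq_matI)
    fix i k assume "i < dim_row (vr * transpose_mat T)" "k < dim_col (vr * transpose_mat T)"
    then have ik: "i = 0" "k < ?n" "k < length Ws" using vrC TC len by auto
    have "mtrace (A * c * transpose_mat (Ws ! k)) = aip A c (Ws ! k)" unfolding aip_def ..
    also have "\<dots> = (\<Sum>j<?n. T $$ (k,j) * aip A c (fs!j))"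
      unfolding TW[OF ik(3)] by (rule aip_lincomb_right[OF Ac fC cC])
    finally have e1: "mtrace (A * c * transpose_mat (Ws ! k)) / sqrt \<mu> = (\<Sum>j<?n. T $$ (k,j) * aip A c (fs!j)) / sqrt \<mu>" by simp
    have "(vr * transpose_mat T) $$ (i,k) = (\<Sum>j<?n. aip A et (fs!j) * T $$ (k,j))"
      using ik vrC TC unfolding vr_def by (simp add: scalar_prod_def atLeast0LessThan)
    also have "\<dots> = (\<Sum>j<?n. T $$ (k,j) * aip A c (fs!j)) / sqrt \<mu>"
      unfolding et_def using aip_smult_left[OF Ac cC Fj] by (simp add: sum_divide_distrib mult_ac)
    finally show "V $$ (i,k) = (vr * transpose_mat T) $$ (i,k)" using e1 ik unfolding V_def by simp
  qed (use vrC TC in \<open>auto simp: V_def\<close>)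
  have sqC: "\<And>M N. M \<in> carrier_mat ?n ?n \<Longrightarrow> N \<in> carrier_mat ?n ?n \<Longrightarrow> M * N \<in> carrier_mat ?n ?n"
    by (rule mult_carrier_mat)
  define X where "X = transpose_mat T * \<Psi>i * T"
  have XC: "X \<in> carrier_mat ?n ?n" unfolding X_def using TC \<Psi>i(4) by simp
  have TtC: "transpose_mat T \<in> carrier_mat ?n ?n" using TC by simp
  have PsiTC: "\<Psi>i * T \<in> carrier_mat ?n ?n" using \<Psi>i(4) TC by simp
  have "T * (\<psi> * X) = T * (\<psi> * (transpose_mat T * (\<Psi>i * T)))"
    unfolding X_def using assoc3[OF TtC \<Psi>i(4) TC] by simp
  also have "\<dots> = T * \<psi> * transpose_mat T * (\<Psi>i * T)"
    using assoc4[OF TC \<psi>C TtC PsiTC] by simp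
  also have "\<dots> = \<Psi> * (\<Psi>i * T)" using PA by simp
  also have "\<dots> = \<Psi> * \<Psi>i * T" using assoc3[OF \<Psi>C \<Psi>i(4) TC] by simp
  also have "\<dots> = T" using \<Psi>i(2) TC by simp
  finally have e2: "T * (\<psi> * X) = T" .
  have \<psi>XC: "\<psi> * X \<in> carrier_mat ?n ?n" using \<psi>C XC by simp
  have "\<psi> * X = (Ti * T) * (\<psi> * X)" using Ti(2) left_mult_one_mat[OF \<psi>XC] by simp
  also have "\<dots> = Ti * (T * (\<psi> * X))" by (rule assoc3[OF Ti(3) TC \<psi>XC])
  also have "\<dots> = 1\<^sub>m ?n" using e2 Ti(2) by simp
  finally have \<psi>X: "\<psi> * X = 1\<^sub>m ?n" .
  have X\<psi>: "X * \<psi> = 1\<^sub>m ?n" by (rule mat_mult_left_right_inverse[OF \<psi>C XC \<psi>X])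
  have vtC0: "transpose_mat vr \<in> carrier_mat ?n 1" using vrC by simp
  have VtC: "vr * transpose_mat T \<in> carrier_mat 1 ?n" using vrC TtC by simp
  have TvC: "T * transpose_mat vr \<in> carrier_mat ?n 1" using TC vtC0 by simp
  have PsiTvC: "\<Psi>i * (T * transpose_mat vr) \<in> carrier_mat ?n 1" using \<Psi>i(4) TvC by simp
  have tV: "transpose_mat V = T * transpose_mat vr"
    unfolding V_eq using transpose_mult[OF vrC TtC] by simp
  have "V * \<Psi>i * transpose_mat V = (vr * transpose_mat T) * (\<Psi>i * (T * transpose_mat vr))"
    unfolding tV unfolding V_eq by (rule assoc_mult_mat[OF VtC \<Psi>i(4) TvC])
  also have "\<dots> = vr * (transpose_mat T * (\<Psi>i * (T * transpose_mat vr)))"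
    by (rule assoc_mult_mat[OF vrC TtC PsiTvC])
  also have "transpose_mat T * (\<Psi>i * (T * transpose_mat vr)) = X * transpose_mat vr"
  proof -
    have TtPsiC: "transpose_mat T * \<Psi>i \<in> carrier_mat ?n ?n" using TtC \<Psi>i(4) by simp
    have "X * transpose_mat vr = (transpose_mat T * \<Psi>i) * (T * transpose_mat vr)"
      unfolding X_def by (rule assoc_mult_mat[OF TtPsiC TC vtC0])
    also have "\<dots> = transpose_mat T * (\<Psi>i * (T * transpose_mat vr))"
      by (rule assoc_mult_mat[OF TtC \<Psi>i(4) TvC])
    finally show ?thesis by simp
  qed
  also have "vr * (X * transpose_mat vr) = vr * X * transpose_mat vr"
    by (rule assoc_mult_mat[OF vrC XC vtC0, symmetric])
  finally have VPV: "V * \<Psi>i * transpose_mat V = vr * X * transpose_mat vr" .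
  define a where "a = mtrace (A * et * et)"
  have a_eq: "a = mtrace (A * c) / \<mu>" unfolding a_def et_def by (rule a_value[OF Ac cC cc mu])
  have phi_eq: "phi_mat A et fs = four_block_mat (mat 1 1 (\<lambda>_. a)) vr (transpose_mat vr) \<psi>"
    unfolding a_def vr_def \<psi>_def by (rule phi_block[OF fC])
  define Y where "Y = - (X * transpose_mat vr)"
  have YC: "Y \<in> carrier_mat ?n 1" unfolding Y_def using XC vrC by simp
  define M where "M = four_block_mat (1\<^sub>m 1) (0\<^sub>m 1 ?n) Y (1\<^sub>m ?n)"
  have a1C: "mat 1 1 (\<lambda>_. a) \<in> carrier_mat 1 1" by simp
  have vtC: "transpose_mat vr \<in> carrier_mat ?n 1" using vrC by simp
  have dM: "det M = 1" unfolding M_def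
    by (subst det_four_block_mat_upper_right_zero[OF one_carrier_mat refl YC one_carrier_mat]) simp
  define B1 where "B1 = mat 1 1 (\<lambda>_. a) * 1\<^sub>m 1 + vr * Y"
  have B1C: "B1 \<in> carrier_mat 1 1" unfolding B1_def using vrC YC by simp
  have prod: "phi_mat A et fs * M = four_block_mat B1 (mat 1 1 (\<lambda>_. a) * 0\<^sub>m 1 ?n + vr * 1\<^sub>m ?n)
       (transpose_mat vr * 1\<^sub>m 1 + \<psi> * Y) (transpose_mat vr * 0\<^sub>m 1 ?n + \<psi> * 1\<^sub>m ?n)"
    unfolding phi_eq M_def B1_def
    by (rule mult_four_block_mat[OF a1C vrC vtC \<psi>C one_carrier_mat zero_carrier_mat YC one_carrier_mat])
  have b2: "mat 1 1 (\<lambda>_. a) * 0\<^sub>m 1 ?n + vr * 1\<^sub>m ?n = vr" using vrC by simp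
  have b4: "transpose_mat vr * 0\<^sub>m 1 ?n + \<psi> * 1\<^sub>m ?n = \<psi>" using \<psi>C vrC by simp
  have "\<psi> * Y = - (\<psi> * (X * transpose_mat vr))" unfolding Y_def using \<psi>C XC vtC by simp
  also have "\<psi> * (X * transpose_mat vr) = (\<psi> * X) * transpose_mat vr"
    by (rule assoc_mult_mat[OF \<psi>C XC vtC, symmetric])
  also have "\<dots> = transpose_mat vr" using \<psi>X vtC by simp
  finally have "\<psi> * Y = - transpose_mat vr" .
  then have b3: "transpose_mat vr * 1\<^sub>m 1 + \<psi> * Y = 0\<^sub>m ?n 1"
    using vtC by (intro eq_matI) auto
  have "det (phi_mat A et fs * M) = det B1 * det \<psi>"
    unfolding prod b2 b3 b4 by (rule det_four_block_mat_lower_left_zero[OF B1C vrC refl \<psi>C])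
  moreover have "det (phi_mat A et fs * M) = det (phi_mat A et fs) * det M"
    by (rule det_mult[of _ "1 + ?n"]) (use phi_eq a1C vrC vtC \<psi>C M_def YC in auto)
  ultimately have dphi: "det (phi_mat A et fs) = det B1 * det \<psi>" using dM by simp
  have "det B1 = B1 $$ (0,0)" by (rule det_single[OF B1C])
  also have "\<dots> = a - (vr * X * transpose_mat vr) $$ (0,0)"
    unfolding B1_def Y_def using vrC XC vtC by (simp add: assoc_mult_mat[OF vrC XC vtC])
  finally have "det (phi_mat A et fs) / det \<psi> = a - (vr * X * transpose_mat vr) $$ (0,0)"
    using dphi d\<psi> by simp
  then show ?thesis
    unfolding et_def[symmetric] \<psi>_def[symmetric] V_def[symmetric] \<Psi>_def[symmetric] \<Psi>i(1)
    using VPV a_eq by simp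
qed

lemma span_mono_append:
  assumes "set Xs \<subseteq> carrier_mat p p"
  shows "mats_span p Xs \<subseteq> mats_span p (Xs @ [X])"
proof (rule span_trans)
  show "set Xs \<subseteq> mats_span p (Xs @ [X])"
  proof
    fix Y assume "Y \<in> set Xs"
    then obtain i where i: "i < length Xs" "Y = Xs ! i" by (auto simp: in_set_conv_nth)
    then have "Y = (Xs @ [X]) ! i" by (simp add: nth_append)
    moreover have "(Xs @ [X]) ! i \<in> carrier_mat p p" using i assms by (auto simp: nth_append)
    ultimately show "Y \<in> mats_span p (Xs @ [X])" using span_nth[of i "Xs @ [X]" p] i by simp
  qed
qed

lemma greedy:
  assumes UC: "set Us \<subseteq> carrier_mat p p"
  shows "k \<le> length Us \<Longrightarrow> \<exists>ts. sorted_wrt (<) ts \<and> set ts \<subseteq> {..<k} \<and>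
     mats_lin_indep p (map ((!) Us) ts) \<and> (\<forall>t<k. Us ! t \<in> mats_span p (map ((!) Us) ts))"
proof (induction k)
  case 0
  have "mats_lin_indep p (map ((!) Us) [])" unfolding mats_lin_indep_def by simp
  then show ?case by (intro exI[of _ "[]"]) auto
next
  case (Suc k)
  then obtain ts where ts: "sorted_wrt (<) ts" "set ts \<subseteq> {..<k}" "mats_lin_indep p (map ((!) Us) ts)"
    "\<forall>t<k. Us ! t \<in> mats_span p (map ((!) Us) ts)" by auto
  have k: "k < length Us" using Suc.prems by simp
  have UkC: "Us ! k \<in> carrier_mat p p" using UC k by auto
  have WC: "set (map ((!) Us) ts) \<subseteq> carrier_mat p p"
  proof
    fix Y assume "Y \<in> set (map ((!) Us) ts)"
    then obtain t where t: "t \<in> set ts" "Y = Us ! t" by auto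
    then have "t < length Us" using ts(2) k by auto
    then have "Us ! t \<in> set Us" by simp
    then show "Y \<in> carrier_mat p p" using UC t(2) by auto
  qed
  show ?case
  proof (cases "Us ! k \<in> mats_span p (map ((!) Us) ts)")
    case True
    then show ?thesis using ts by (intro exI[of _ ts]) (auto simp: less_Suc_eq)
  next
    case False
    let ?ts = "ts @ [k]"
    have s: "sorted_wrt (<) ?ts" using ts(1,2) by (auto simp: sorted_wrt_append)
    have m: "map ((!) Us) ?ts = map ((!) Us) ts @ [Us ! k]" by simp
    have i: "mats_lin_indep p (map ((!) Us) ?ts)"
      unfolding m by (rule indep_append[OF ts(3) UkC False])
    have sp: "Us ! t \<in> mats_span p (map ((!) Us) ?ts)" if "t < Suc k" for t
    proof (cases "t < k")
      case True
      then show ?thesis using ts(4) span_mono_append[OF WC, of "Us ! k"] m by auto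
    next
      case False
      then have "t = k" using that by simp
      moreover have "Us ! k = (map ((!) Us) ts @ [Us ! k]) ! length ts" by (simp add: nth_append)
      moreover have "(map ((!) Us) ts @ [Us ! k]) ! length ts \<in> mats_span p (map ((!) Us) ts @ [Us ! k])"
        by (rule span_nth) (use UkC in \<open>auto simp: nth_append\<close>)
      ultimately show ?thesis using m by simp
    qed
    show ?thesis using s i sp ts(2) by (intro exI[of _ ?ts]) auto
  qed
qed

lemma card_less_sorted:
  fixes ts :: "nat list"
  assumes s: "sorted_wrt (<) ts" and k: "k < length ts"
  shows "card {a \<in> set ts. a < ts ! k} = k"
proof -
  have "{a \<in> set ts. a < ts ! k} = set (take k ts)"
  proof (intro equalityI subsetI)
    fix a assume "a \<in> {a \<in> set ts. a < ts ! k}"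
    then obtain i where i: "i < length ts" "a = ts ! i" "a < ts ! k" by (auto simp: in_set_conv_nth)
    have "i < k"
    proof (rule ccontr)
      assume "\<not> i < k"
      then have "i = k \<or> k < i" by auto
      then show False
      proof
        assume "i = k" then show False using i by simp
      next
        assume "k < i" then have "ts ! k < ts ! i" using sorted_wrt_nth_less[OF s _ i(1)] by simp
        then show False using i by simp
      qed
    qed
    then show "a \<in> set (take k ts)" using i by (auto simp: in_set_conv_nth)
  next
    fix a assume "a \<in> set (take k ts)"
    then obtain i where i: "i < k" "a = ts ! i" using k by (auto simp: in_set_conv_nth)
    then have "a < ts ! k" using sorted_wrt_nth_less[OF s i(1) k] by simp
    moreover have "a \<in> set ts" using i k by simp
    ultimately show "a \<in> {a \<in> set ts. a < ts ! k}" by simp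
  qed
  moreover have "distinct (take k ts)"
  proof -
    have "distinct ts" using s strict_sorted_iff by blast
    then show ?thesis by (rule distinct_take)
  qed
  ultimately show ?thesis using k by (simp add: distinct_card)
qed

lemma pick_sorted:
  fixes ts :: "nat list"
  assumes s: "sorted_wrt (<) ts" and k: "k < length ts"
  shows "pick (set ts) k = ts ! k"
  using pick_card_in_set[of "ts ! k" "set ts"] card_less_sorted[OF s k] k by simp

lemma gram_rank:
  assumes fC: "set fs \<subseteq> carrier_mat p p" and on: "orthonormal_mats fs" and find: "mats_lin_indep p fs"
    and UC: "set Us \<subseteq> carrier_mat p p" and hspan: "mats_span p Us = mats_span p fs"
  shows "mat_rank (length Us) (gram_mat Us) = length fs"
proof -
  let ?q = "length Us"
  let ?n = "length fs"
  let ?G = "gram_mat Us"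
  interpret V: vec_space "TYPE(real)" ?q .
  have Uk: "Us ! t \<in> carrier_mat p p" if "t < ?q" for t using UC that by auto
  have Uspan: "Us ! t \<in> mats_span p Us" if "t < ?q" for t using span_nth[OF that Uk[OF that]] .
  have Wh: "set Us \<subseteq> mats_span p fs"
    using Uspan hspan by (auto simp: in_set_conv_nth)
  define T where "T = mat (length Us) (length fs) (\<lambda>(k,j). aip (1\<^sub>m p) (Us!k) (fs!j))"
  have TC: "T \<in> carrier_mat ?q ?n" and TW: "\<And>k. k < ?q \<Longrightarrow> Us ! k = mat_lincomb p (\<lambda>j. T $$ (k,j)) fs"
    using coord_setup[OF fC on Wh] unfolding T_def by auto
  have GC: "?G \<in> carrier_mat ?q ?q" unfolding gram_mat_def by simp
  have G1: "?G = T * psi_mat (1\<^sub>m p) fs * transpose_mat T"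
    unfolding gram_psi_one[OF UC] by (rule psi_coord[OF one_carrier_mat fC TC TW])
  define Gk where "Gk = (\<lambda>k. mat ?q ?q (\<lambda>(t,s). \<Sum>j<k. T $$ (t,j) * T $$ (s,j)))"
  have GGk: "?G = Gk ?n"
  proof -
    have "?G = T * transpose_mat T" using G1 psi_one_orthonormal[OF on fC] TC by simp
    also have "\<dots> = Gk ?n"
      by (rule eq_matI) (use TC in \<open>auto simp: Gk_def scalar_prod_def atLeast0LessThan\<close>)
    finally show ?thesis .
  qed
  have rk: "V.rank (Gk k) \<le> k" for k
  proof (induction k)
    case 0
    have "Gk 0 = 0\<^sub>m ?q ?q" unfolding Gk_def by (rule eq_matI) auto
    then show ?case using V.rank_0I by simp
  next
    case (Suc k)
    define R where "R = mat ?q ?q (\<lambda>(t,s). T $$ (t,k) * T $$ (s,k))"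
    have "Gk (Suc k) = Gk k + R" unfolding Gk_def R_def by (rule eq_matI) auto
    moreover have "V.rank (Gk k + R) \<le> V.rank (Gk k) + V.rank R"
      by (rule V.rank_subadditive) (auto simp: Gk_def R_def)
    moreover have "V.rank R \<le> 1"
      by (rule V.rank_le_1_product_entries[of R ?q "\<lambda>t. T $$ (t,k)" "\<lambda>s. T $$ (s,k)"]) (auto simp: R_def)
    ultimately show ?case using Suc.IH by simp
  qed
  have upper: "V.rank ?G \<le> ?n" using rk[of ?n] GGk by simp
  obtain ts where ts: "sorted_wrt (<) ts" "set ts \<subseteq> {..<?q}" "mats_lin_indep p (map ((!) Us) ts)"
    "\<forall>t<?q. Us ! t \<in> mats_span p (map ((!) Us) ts)"
    using greedy[OF UC, of ?q] by auto
  let ?W = "map ((!) Us) ts"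
  have WC: "set ?W \<subseteq> carrier_mat p p" using ts(2) Uk by auto
  have WU: "set ?W \<subseteq> mats_span p Us" using ts(2) Uspan by auto
  have UW: "set Us \<subseteq> mats_span p ?W" using ts(4) by (auto simp: in_set_conv_nth)
  have "mats_span p ?W = mats_span p Us"
    using span_trans[OF WU] span_trans[OF UW] by auto
  then have Wb: "is_mat_basis p (mats_span p fs) ?W"
    unfolding is_mat_basis_def using WC ts(3) hspan by simp
  have fb: "is_mat_basis p (mats_span p fs) fs" unfolding is_mat_basis_def using fC find by simp
  have lts: "length ts = ?n" using basis_length_unique[OF Wb fb] by simp
  have dW: "det (psi_mat (1\<^sub>m p) ?W) \<noteq> 0"
    using posdef_det[OF psi_posdef[OF one_posdef WC ts(3)]] .
  have dist: "distinct ts" using ts(1) strict_sorted_iff by blast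
  have cset: "{i. i < dim_row ?G \<and> i \<in> set ts} = set ts" "{i. i < dim_col ?G \<and> i \<in> set ts} = set ts"
    using ts(2) GC by auto
  have ccard: "card (set ts) = length ts" using distinct_card[OF dist] .
  have sub: "submatrix ?G (set ts) (set ts) = psi_mat (1\<^sub>m p) ?W"
  proof (rule eq_matI)
    fix k l assume "k < dim_row (psi_mat (1\<^sub>m p) ?W)" "l < dim_col (psi_mat (1\<^sub>m p) ?W)"
    then have kl: "k < length ts" "l < length ts" by auto
    have tk: "ts ! k < ?q" "ts ! l < ?q" using kl ts(2) nth_mem by blast+
    have "submatrix ?G (set ts) (set ts) $$ (k,l) = ?G $$ (pick (set ts) k, pick (set ts) l)"
      by (rule submatrix_index) (use kl cset ccard in auto)
    also have "\<dots> = ?G $$ (ts ! k, ts ! l)" using pick_sorted[OF ts(1)] kl by simp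
    also have "\<dots> = psi_mat (1\<^sub>m p) ?W $$ (k,l)"
      unfolding gram_psi_one[OF UC] using tk kl by (simp add: psi_index)
    finally show "submatrix ?G (set ts) (set ts) $$ (k,l) = psi_mat (1\<^sub>m p) ?W $$ (k,l)" .
  qed (use cset ccard in \<open>auto simp: dim_submatrix\<close>)
  have "card {j. j < ?q \<and> j \<in> set ts} \<le> V.rank ?G"
    by (rule V.rank_gt_minor[OF GC, of "set ts"]) (use sub dW in simp)
  moreover have "{j. j < ?q \<and> j \<in> set ts} = set ts" using ts(2) by auto
  ultimately have lower: "?n \<le> V.rank ?G" using ccard lts by simp
  show ?thesis unfolding mat_rank_def using upper lower by simp
qed

lemma final_body:
  fixes p :: nat and ns :: "nat list" and E :: "nat set set" and colr :: "nat set \<Rightarrow> 'c"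
    and i d \<alpha> :: nat and cs :: "nat \<Rightarrow> real mat"
    and fs Bs :: "real mat list" and A :: "real mat"
  assumes part: "ordered_partition p ns"
    and cbc: "cBC_space ns (ZGC p E colr)"
    and frame: "jordan_frame ns i (ZGC p E colr) cs d"
    and alpha_lt: "\<alpha> < d"
    and onb: "is_mat_basis p (hspace ns i (ZGC p E colr) cs d \<alpha>) fs" "orthonormal_mats fs"
    and Lbasis: "is_mat_basis p (Lspace ns i (ZGC p E colr)) Bs"
    and A_pd: "posdef_mat p A"
    and dZ: "Z = ZGC p E colr" and dc: "c = cs \<alpha>" and dmu: "\<mu> = real (mat_rank p c)"
    and det_: "et = (1 / sqrt \<mu>) \<cdot>\<^sub>m c" and dh: "h = hspace ns i Z cs d \<alpha>"
    and dm: "m = mat_dim p h" and dq: "q = length Bs" and dU: "U = (\<lambda>t. Bs ! t * c)"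
    and dG: "G = gram_mat (map U [0..<q])" and dpsi: "\<psi> = psi_mat A fs"
    and dphi: "\<phi> = phi_mat A et fs" and dlam: "lam = mtrace (A * c) / \<mu>"
  shows "m = mat_rank q G \<and>
       (0 < m \<longrightarrow>
         (\<forall>ts. length ts = m \<and> set ts \<subseteq> {..<q} \<and>
                det (mat m m (\<lambda>(k,l). G $$ (ts ! k, ts ! l))) \<noteq> 0 \<longrightarrow>
           (let Gt = mat m m (\<lambda>(k,l). G $$ (ts ! k, ts ! l));
                U' = map U ts;
                \<Psi> = psi_mat A U';
                V = mat 1 m (\<lambda>(_,k). mtrace (A * c * transpose_mat (U' ! k)) / sqrt \<mu>)
            in is_mat_basis p h U' \<and>
               posdef_mat m \<Psi> \<and>
               det \<psi> = det \<Psi> / det Gt \<and>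
               det \<phi> / det \<psi> = lam - (V * the (mat_inverse \<Psi>) * transpose_mat V) $$ (0,0)))) \<and>
       (m = 0 \<longrightarrow> det \<phi> / det \<psi> = lam)"
proof -
  have sp: "sum_list ns = p" by (rule part_sum[OF part])
  have csM: "cs \<alpha> \<in> Mspace ns i (ZGC p E colr)" using frame_props(1)[OF frame alpha_lt] .
  have cC: "c \<in> carrier_mat p p" using csM ZGC_sym(1) dc unfolding Mspace_def by auto
  have cc: "c * c = c" using frame_props(3)[OF frame alpha_lt alpha_lt] dc by simp
  have mu0: "0 \<le> \<mu>" using dmu by simp
  have hc: "h = mats_span p (map (\<lambda>B. B * c) Bs)"
    using h_char[OF part cbc frame alpha_lt Lbasis] dh dZ dc by simp
  define Us where "Us = map U [0..<q]"
  have Us_eq: "Us = map (\<lambda>B. B * c) Bs"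
    unfolding Us_def dU dq by (rule nth_equalityI) auto
  have lenUs: "length Us = q" unfolding Us_def by simp
  have Usn: "\<And>t. t < q \<Longrightarrow> Us ! t = U t" unfolding Us_def by simp
  have BC: "set Bs \<subseteq> carrier_mat p p" using Lbasis unfolding is_mat_basis_def by auto
  have UC: "set Us \<subseteq> carrier_mat p p" unfolding Us_eq using BC cC by auto
  have onb': "is_mat_basis p h fs" using onb(1) dh dZ by simp
  have fC: "set fs \<subseteq> carrier_mat p p" and find: "mats_lin_indep p fs" and fspan: "mats_span p fs = h"
    using onb' unfolding is_mat_basis_def by auto
  have hspan: "mats_span p Us = mats_span p fs" using hc fspan Us_eq by simp
  have mn: "m = length fs" using dm mat_dim_eq[OF onb'] by simp
  have rank: "mat_rank q G = length fs"
    using gram_rank[OF fC onb(2) find UC hspan] lenUs dG Us_def by simp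
  have Uk: "Us ! t \<in> carrier_mat p p" if "t < q" for t using UC that lenUs by auto
  have Uspan: "Us ! t \<in> mats_span p fs" if "t < q" for t
    using span_nth[of t Us p] Uk[OF that] that lenUs hspan by simp
  have part2: "\<forall>ts. length ts = m \<and> set ts \<subseteq> {..<q} \<and>
                det (mat m m (\<lambda>(k,l). G $$ (ts ! k, ts ! l))) \<noteq> 0 \<longrightarrow>
           (let Gt = mat m m (\<lambda>(k,l). G $$ (ts ! k, ts ! l));
                U' = map U ts;
                \<Psi> = psi_mat A U';
                V = mat 1 m (\<lambda>(_,k). mtrace (A * c * transpose_mat (U' ! k)) / sqrt \<mu>)
            in is_mat_basis p h U' \<and>
               posdef_mat m \<Psi> \<and>
               det \<psi> = det \<Psi> / det Gt \<and>
               det \<phi> / det \<psi> = lam - (V * the (mat_inverse \<Psi>) * transpose_mat V) $$ (0,0))"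
  proof (intro allI impI)
    fix ts assume tsa: "length ts = m \<and> set ts \<subseteq> {..<q} \<and>
                det (mat m m (\<lambda>(k,l). G $$ (ts ! k, ts ! l))) \<noteq> 0"
    then have lts: "length ts = length fs" and tsq: "set ts \<subseteq> {..<q}"
      and dGt: "det (mat m m (\<lambda>(k,l). G $$ (ts ! k, ts ! l))) \<noteq> 0" using mn by auto
    have tk: "ts ! k < q" if "k < length ts" for k using tsq that nth_mem by blast
    let ?W = "map U ts"
    have WC: "set ?W \<subseteq> carrier_mat p p"
    proof
      fix Y assume "Y \<in> set ?W"
      then obtain t where "t \<in> set ts" "Y = U t" by auto
      then show "Y \<in> carrier_mat p p" using tsq Uk Usn by auto
    qed
    have Wh: "set ?W \<subseteq> mats_span p fs"
    proof
      fix Y assume "Y \<in> set ?W"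
      then obtain t where "t \<in> set ts" "Y = U t" by auto
      then show "Y \<in> mats_span p fs" using tsq Uspan Usn by auto
    qed
    have lenW: "length ?W = length fs" using lts by simp
    have Gt_eq: "mat m m (\<lambda>(k,l). G $$ (ts ! k, ts ! l)) = psi_mat (1\<^sub>m p) ?W"
    proof (rule eq_matI)
      fix k l assume "k < dim_row (psi_mat (1\<^sub>m p) ?W)" "l < dim_col (psi_mat (1\<^sub>m p) ?W)"
      then have kl: "k < length ts" "l < length ts" by auto
      have "G $$ (ts ! k, ts ! l) = psi_mat (1\<^sub>m p) Us $$ (ts ! k, ts ! l)"
        using dG Us_def gram_psi_one[OF UC] by simp
      also have "\<dots> = aip (1\<^sub>m p) (U (ts ! k)) (U (ts ! l))"
        using tk[OF kl(1)] tk[OF kl(2)] lenUs Usn by (simp add: psi_index)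
      also have "\<dots> = psi_mat (1\<^sub>m p) ?W $$ (k,l)" using kl by (simp add: psi_index)
      finally show "mat m m (\<lambda>(k,l). G $$ (ts ! k, ts ! l)) $$ (k,l) = psi_mat (1\<^sub>m p) ?W $$ (k,l)"
        using kl tsa by simp
    qed (use tsa in auto)
    have dG': "det (psi_mat (1\<^sub>m p) ?W) \<noteq> 0" using dGt Gt_eq by simp
    note mt = main_ts[OF A_pd fC onb(2) find WC Wh lenW dG']
    have sch: "det (phi_mat A ((1 / sqrt \<mu>) \<cdot>\<^sub>m c) fs) / det (psi_mat A fs) =
     mtrace (A * c) / \<mu> -
     (mat 1 (length fs) (\<lambda>(_, k). mtrace (A * c * transpose_mat (?W ! k)) / sqrt \<mu>) *
      the (mat_inverse (psi_mat A ?W)) *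
      transpose_mat (mat 1 (length fs) (\<lambda>(_, k). mtrace (A * c * transpose_mat (?W ! k)) / sqrt \<mu>))) $$ (0,0)"
      by (rule schur[OF A_pd fC onb(2) find WC Wh lenW dG' cC cc mu0])
    have basis: "is_mat_basis p h ?W"
      unfolding is_mat_basis_def using WC mt(1) mt(2) fspan by simp
    show "let Gt = mat m m (\<lambda>(k,l). G $$ (ts ! k, ts ! l));
                U' = map U ts;
                \<Psi> = psi_mat A U';
                V = mat 1 m (\<lambda>(_,k). mtrace (A * c * transpose_mat (U' ! k)) / sqrt \<mu>)
            in is_mat_basis p h U' \<and>
               posdef_mat m \<Psi> \<and>
               det \<psi> = det \<Psi> / det Gt \<and>
               det \<phi> / det \<psi> = lam - (V * the (mat_inverse \<Psi>) * transpose_mat V) $$ (0,0)"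
      unfolding Let_def Gt_eq
      using basis mt(3) mt(4) sch mn dpsi dphi dlam det_ by simp
  qed
  have part3: "m = 0 \<longrightarrow> det \<phi> / det \<psi> = lam"
  proof
    assume "m = 0"
    then have f0: "fs = []" using mn by simp
    have "det \<psi> = 1" unfolding dpsi f0 by (rule det_dim_zero) (simp add: psi_mat_def)
    moreover have "det \<phi> = \<phi> $$ (0,0)" by (rule det_single) (simp add: dphi phi_mat_def f0)
    moreover have "\<phi> $$ (0,0) = mtrace (A * et * et)" by (simp add: dphi phi_mat_def f0)
    moreover have "mtrace (A * et * et) = lam"
      unfolding det_ dlam by (rule a_value[OF posdef_D(1)[OF A_pd] cC cc mu0])
    ultimately show "det \<phi> / det \<psi> = lam" by simp
  qed
  show ?thesis using rank mn part2 part3 by simp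
qed

theorem theorem4p16:
  fixes p :: nat and ns :: "nat list" and E :: "nat set set" and colr :: "nat set \<Rightarrow> 'c"
    and i d \<alpha> :: nat and cs :: "nat \<Rightarrow> real mat"
    and fs Bs :: "real mat list" and A :: "real mat"
  assumes graph: "simple_graph_on p E"
    and colours: "\<forall>v<p. \<forall>e\<in>E. colr {v} \<noteq> colr e"
    and part: "ordered_partition p ns"
    and cbc: "cBC_space ns (ZGC p E colr)"
    and i_lt: "i < length ns"
    and frame: "jordan_frame ns i (ZGC p E colr) cs d"
    and alpha_lt: "\<alpha> < d"
    and onb: "is_mat_basis p (hspace ns i (ZGC p E colr) cs d \<alpha>) fs" "orthonormal_mats fs"
    and Lbasis: "is_mat_basis p (Lspace ns i (ZGC p E colr)) Bs"
    and A_pd: "posdef_mat p A"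
  shows
   "let Z = ZGC p E colr;
        c = cs \<alpha>;
        \<mu> = real (mat_rank p c);
        et = (1 / sqrt \<mu>) \<cdot>\<^sub>m c;
        h = hspace ns i Z cs d \<alpha>;
        m = mat_dim p h;
        q = length Bs;
        U = (\<lambda>t. Bs ! t * c);
        G = gram_mat (map U [0..<q]);
        \<psi> = psi_mat A fs;
        \<phi> = phi_mat A et fs;
        lam = mtrace (A * c) / \<mu>
    in m = mat_rank q G \<and>
       (0 < m \<longrightarrow>
         (\<forall>ts. length ts = m \<and> set ts \<subseteq> {..<q} \<and>
                det (mat m m (\<lambda>(k,l). G $$ (ts ! k, ts ! l))) \<noteq> 0 \<longrightarrow>
           (let Gt = mat m m (\<lambda>(k,l). G $$ (ts ! k, ts ! l));
                U' = map U ts;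
                \<Psi> = psi_mat A U';
                V = mat 1 m (\<lambda>(_,k). mtrace (A * c * transpose_mat (U' ! k)) / sqrt \<mu>)
            in is_mat_basis p h U' \<and>
               posdef_mat m \<Psi> \<and>
               det \<psi> = det \<Psi> / det Gt \<and>
               det \<phi> / det \<psi> = lam - (V * the (mat_inverse \<Psi>) * transpose_mat V) $$ (0,0)))) \<and>
       (m = 0 \<longrightarrow> det \<phi> / det \<psi> = lam)"
  unfolding Let_def
  by (rule final_body[OF part cbc frame alpha_lt onb Lbasis A_pd refl refl refl refl refl refl refl refl refl refl refl refl, unfolded Let_def])

end
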